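(* For every $t$, $$\mathrm{var}(r_t)=\mu^2\lambda^2 e\int_{-1}^0\int_{-1}^0\left\{e^{\gamma_Z(s-t')}-1\right\}dt'\,ds+\lambda e^{1/2}(\mu^2+\sigma_e^2).$$
   Context: Standing model. Fix $d\in[0,\tfrac12)$ and put $H=\tfrac12+d$. Let $B_H$ be a fractional Brownian motion with Hurst index $H$ (a standard Brownian motion if $H=\tfrac12$), fix $c>0$, and let $Z_H(t)=B_H(ct)-B_H(ct-1)$, $t\in\mathbb R$; this is a stationary Gaussian process with mean $0$, variance $1$ and autocovariance $\gamma_Z(r)=\tfrac12\left[|cr+1|^{2H}-2|cr|^{2H}+|cr-1|^{2H}\right]$. Fix $\lambda>0$ and let $N$ be a Cox process on $\mathbb R$ directed by the random measure $\Lambda(A)=\int_A\lambda e^{Z_H(t)}\,dt$ (conditionally on $Z_H$, $N$ is a Poisson process with mean measure $\Lambda$). Write $N(t)=N((0,t])$ and $\Delta N(t)=N((t-1,t])$. Let $(e_k)$ be i.i.d. random variables with mean $0$, variance $\sigma_e^2$ and finite moments of all orders, independent of $N$, attached to the successive points of $N$, and fix $\mu>0$. The log price is $\log P(t)=\sum_{k=1}^{N(t)}(\mu+e_k)$, and the daily return for $t\in\mathbb Z$ is $r_t=\mu\,\Delta N(t)+\sum e_k$, the sum over the shocks attached to the points of $N$ in $(t-1,t]$; $(r_t)$ is strictly stationary. *)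

theory Defs
  imports "HOL-Probability.Probability"
begin

definition gaussian_rv :: "'a measure \<Rightarrow> ('a \<Rightarrow> real) \<Rightarrow> real \<Rightarrow> real \<Rightarrow> bool" where
  "gaussian_rv M X m v \<longleftrightarrow> X \<in> borel_measurable M \<and> v \<ge> 0 \<and>
     (if v > 0 then distributed M lborel X (normal_density m (sqrt v))
      else (AE \<omega> in M. X \<omega> = m))"

definition fbm_cov :: "real \<Rightarrow> real \<Rightarrow> real \<Rightarrow> real" where
  "fbm_cov H s t = (\<bar>s\<bar> powr (2*H) + \<bar>t\<bar> powr (2*H) - \<bar>t - s\<bar> powr (2*H)) / 2"

definition is_fbm :: "'a measure \<Rightarrow> real \<Rightarrow> ('a \<Rightarrow> real \<Rightarrow> real) \<Rightarrow> bool" where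
  "is_fbm M H B \<longleftrightarrow>
     (\<forall>t. (\<lambda>\<omega>. B \<omega> t) \<in> borel_measurable M) \<and>
     (\<forall>\<omega>\<in>space M. continuous_on UNIV (B \<omega>)) \<and>
     (\<forall>(I :: real set) (cf :: real \<Rightarrow> real). finite I \<longrightarrow>
        gaussian_rv M (\<lambda>\<omega>. \<Sum>t\<in>I. cf t * B \<omega> t) 0
          (\<Sum>s\<in>I. \<Sum>t\<in>I. cf s * cf t * fbm_cov H s t))"

text \<open>Autocovariance of Z_H(t) = B_H(ct) - B_H(ct-1).\<close>
definition gammaZ :: "real \<Rightarrow> real \<Rightarrow> real \<Rightarrow> real" where
  "gammaZ H c r = (\<bar>c*r + 1\<bar> powr (2*H) - 2 * \<bar>c*r\<bar> powr (2*H) + \<bar>c*r - 1\<bar> powr (2*H)) / 2"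

definition count_pts :: "('a \<Rightarrow> int \<Rightarrow> real) \<Rightarrow> 'a \<Rightarrow> real set \<Rightarrow> nat" where
  "count_pts T \<omega> A = card {k. T \<omega> k \<in> A}"

text \<open>Cox property: conditionally on the sigma-algebra F (generated by the driving
  process), the counts of the point process in finitely many disjoint intervals
  (a_i, b_i] are independent Poisson with means Lam \<omega> (a_i) (b_i).\<close>
definition cox_given :: "'a measure \<Rightarrow> 'a measure \<Rightarrow> ('a \<Rightarrow> real \<Rightarrow> real \<Rightarrow> real)
    \<Rightarrow> ('a \<Rightarrow> int \<Rightarrow> real) \<Rightarrow> bool" where
  "cox_given M F Lam T \<longleftrightarrow>
     (\<forall>(m::nat) (a::nat \<Rightarrow> real) (b::nat \<Rightarrow> real) (n::nat \<Rightarrow> nat).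
        (\<forall>i<m. a i \<le> b i) \<longrightarrow> (\<forall>i<m. \<forall>j<m. i \<noteq> j \<longrightarrow> b i \<le> a j \<or> b j \<le> a i) \<longrightarrow>
        (AE \<omega> in M. real_cond_exp M F
            (indicator {\<omega>'\<in>space M. \<forall>i<m. count_pts T \<omega>' {a i<..b i} = n i}) \<omega>
          = (\<Prod>i<m. exp (- Lam \<omega> (a i) (b i)) * Lam \<omega> (a i) (b i) ^ n i / fact (n i))))"

end

theory Submission
  imports Defs "HOL-Library.Infinite_Set"
begin

lemma normal_exp_shift:
  assumes "\<sigma> > 0"
  shows "normal_density 0 \<sigma> x * exp x = exp (\<sigma>\<^sup>2/2) * normal_density (\<sigma>\<^sup>2) \<sigma> x"
proof -
  have "-(x - 0)\<^sup>2/(2*\<sigma>\<^sup>2) + x = \<sigma>\<^sup>2/2 + (-(x - \<sigma>\<^sup>2)\<^sup>2/(2*\<sigma>\<^sup>2))"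
    using assms by (simp add: field_simps power2_eq_square)
  then have "exp (-(x - 0)\<^sup>2/(2*\<sigma>\<^sup>2)) * exp x = exp (\<sigma>\<^sup>2/2) * exp (-(x - \<sigma>\<^sup>2)\<^sup>2/(2*\<sigma>\<^sup>2))"
    by (metis exp_add)
  then show ?thesis unfolding normal_density_def by (simp add: algebra_simps)
qed

lemma gauss_mgf:
  assumes "prob_space M" "gaussian_rv M X 0 v"
  shows "integrable M (\<lambda>\<omega>. exp (X \<omega>))" "(\<integral>\<omega>. exp (X \<omega>) \<partial>M) = exp (v/2)"
proof -
  interpret prob_space M by fact
  have Xm[measurable]: "X \<in> borel_measurable M" and v: "v \<ge> 0" using assms(2) unfolding gaussian_rv_def by auto
  have "integrable M (\<lambda>\<omega>. exp (X \<omega>)) \<and> (\<integral>\<omega>. exp (X \<omega>) \<partial>M) = exp (v/2)"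
  proof (cases "v > 0")
    case True
    define \<sigma> where "\<sigma> = sqrt v"
    have s: "\<sigma> > 0" "\<sigma>\<^sup>2 = v" using True by (auto simp: \<sigma>_def)
    have D: "distributed M lborel X (normal_density 0 \<sigma>)" using assms(2) True unfolding gaussian_rv_def \<sigma>_def by auto
    have eq: "(\<lambda>x. normal_density 0 \<sigma> x * exp x) = (\<lambda>x. exp (\<sigma>\<^sup>2/2) * normal_density (\<sigma>\<^sup>2) \<sigma> x)"
      using normal_exp_shift[OF s(1)] by auto
    have I: "integrable lborel (\<lambda>x. normal_density 0 \<sigma> x * exp x)" unfolding eq using integrable_normal_density[OF s(1)] by simp
    have "integrable M (\<lambda>\<omega>. exp (X \<omega>))"
      using distributed_integrable[OF D, of exp] I by simp
    moreover have "(\<integral>\<omega>. exp (X \<omega>) \<partial>M) = exp (v/2)"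
      using distributed_integral[OF D, of exp] integral_normal_density[OF s(1)] unfolding eq by (simp add: s)
    ultimately show ?thesis by simp
  next
    case False
    then have "v = 0" using v by simp
    then have ae: "AE \<omega> in M. X \<omega> = 0" using assms(2) unfolding gaussian_rv_def by auto
    then have ae2: "AE \<omega> in M. exp (X \<omega>) = 1" by eventually_elim simp
    have "integrable M (\<lambda>\<omega>. exp (X \<omega>))"
      using integrable_cong_AE[OF _ _ ae2] by simp
    moreover have "(\<integral>\<omega>. exp (X \<omega>) \<partial>M) = 1"
      using integral_cong_AE[OF _ _ ae2] prob_space by simp
    ultimately show ?thesis using \<open>v = 0\<close> by simp
  qed
  then show "integrable M (\<lambda>\<omega>. exp (X \<omega>))" "(\<integral>\<omega>. exp (X \<omega>) \<partial>M) = exp (v/2)" by auto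
qed

lemma fbm_lincomb:
  fixes I :: "'i set" and a x :: "'i \<Rightarrow> real"
  assumes "is_fbm M H B" "finite I"
  shows "gaussian_rv M (\<lambda>\<omega>. \<Sum>i\<in>I. a i * B \<omega> (x i)) 0
           (\<Sum>i\<in>I. \<Sum>j\<in>I. a i * a j * fbm_cov H (x i) (x j))"
proof -
  define P where "P = x ` I"
  define cf where "cf p = (\<Sum>i\<in>{i\<in>I. x i = p}. a i)" for p
  have fP: "finite P" using assms(2) by (simp add: P_def)
  have G: "gaussian_rv M (\<lambda>\<omega>. \<Sum>p\<in>P. cf p * B \<omega> p) 0 (\<Sum>p\<in>P. \<Sum>q\<in>P. cf p * cf q * fbm_cov H p q)"
    using assms(1) fP unfolding is_fbm_def by blast
  have e1: "(\<Sum>p\<in>P. cf p * B \<omega> p) = (\<Sum>i\<in>I. a i * B \<omega> (x i))" for \<omega>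
  proof -
    have "(\<Sum>p\<in>P. cf p * B \<omega> p) = (\<Sum>p\<in>P. \<Sum>i\<in>{i\<in>I. x i = p}. a i * B \<omega> (x i))"
      unfolding cf_def sum_distrib_right by (intro sum.cong refl) auto
    also have "\<dots> = (\<Sum>i\<in>I. a i * B \<omega> (x i))"
      by (rule sum.group) (auto simp: P_def assms(2))
    finally show ?thesis .
  qed
  have e2: "(\<Sum>p\<in>P. \<Sum>q\<in>P. cf p * cf q * fbm_cov H p q) = (\<Sum>i\<in>I. \<Sum>j\<in>I. a i * a j * fbm_cov H (x i) (x j))"
  proof -
    have inner: "cf p * cf q * fbm_cov H p q = (\<Sum>i\<in>{i\<in>I. x i = p}. \<Sum>j\<in>{j\<in>I. x j = q}. a i * a j * fbm_cov H (x i) (x j))" for p q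
    proof -
      have "cf p * cf q * fbm_cov H p q = (\<Sum>i\<in>{i\<in>I. x i = p}. \<Sum>j\<in>{j\<in>I. x j = q}. a i * a j * fbm_cov H p q)"
        unfolding cf_def sum_distrib_right sum_distrib_left by (subst sum.swap) (simp add: algebra_simps)
      also have "\<dots> = (\<Sum>i\<in>{i\<in>I. x i = p}. \<Sum>j\<in>{j\<in>I. x j = q}. a i * a j * fbm_cov H (x i) (x j))"
        by (intro sum.cong refl) auto
      finally show ?thesis .
    qed
    have "(\<Sum>p\<in>P. \<Sum>q\<in>P. cf p * cf q * fbm_cov H p q)
        = (\<Sum>p\<in>P. \<Sum>i\<in>{i\<in>I. x i = p}. \<Sum>q\<in>P. \<Sum>j\<in>{j\<in>I. x j = q}. a i * a j * fbm_cov H (x i) (x j))"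
      unfolding inner by (intro sum.cong refl sum.swap)
    also have "\<dots> = (\<Sum>i\<in>I. \<Sum>q\<in>P. \<Sum>j\<in>{j\<in>I. x j = q}. a i * a j * fbm_cov H (x i) (x j))"
      by (rule sum.group) (auto simp: P_def assms(2))
    also have "\<dots> = (\<Sum>i\<in>I. \<Sum>j\<in>I. a i * a j * fbm_cov H (x i) (x j))"
      by (intro sum.cong refl sum.group) (auto simp: P_def assms(2))
    finally show ?thesis .
  qed
  show ?thesis using G unfolding e1 e2 .
qed

lemma cov4:
  fixes P Q b :: real
  defines "x \<equiv> (\<lambda>i::nat. if i = 0 then P else if i = 1 then P - 1 else if i = 2 then Q else Q - 1)"
  defines "a \<equiv> (\<lambda>i::nat. if i = 0 then 1 else if i = 1 then -1 else if i = 2 then b else - b)"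
  assumes H: "H > 0"
  shows "(\<Sum>i\<in>{0,1,2,3}. \<Sum>j\<in>{0,1,2,3}. a i * a j * fbm_cov H (x i) (x j))
      = 1 + b\<^sup>2 + b * (\<bar>P - Q + 1\<bar> powr (2*H) - 2 * \<bar>P - Q\<bar> powr (2*H) + \<bar>P - Q - 1\<bar> powr (2*H))"
proof -
  have f1: "\<bar>P - (P - 1)\<bar> = 1" "\<bar>P - 1 - P\<bar> = 1" "\<bar>Q - (Q - 1)\<bar> = 1" "\<bar>Q - 1 - Q\<bar> = 1" by auto
  have f2: "\<bar>Q - P\<bar> = \<bar>P - Q\<bar>" "\<bar>Q - 1 - (P - 1)\<bar> = \<bar>P - Q\<bar>" "\<bar>P - 1 - (Q - 1)\<bar> = \<bar>P - Q\<bar>"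
    "\<bar>Q - 1 - P\<bar> = \<bar>P - Q + 1\<bar>" "\<bar>P - (Q - 1)\<bar> = \<bar>P - Q + 1\<bar>"
    "\<bar>Q - (P - 1)\<bar> = \<bar>P - Q - 1\<bar>" "\<bar>P - 1 - Q\<bar> = \<bar>P - Q - 1\<bar>" by auto
  have f3: "\<bar>Q - P\<bar> = \<bar>P - Q\<bar>" "\<bar>Q - (1 + P)\<bar> = \<bar>1 + P - Q\<bar>" "\<bar>1 + Q - P\<bar> = \<bar>P - (1 + Q)\<bar>" by auto
  show ?thesis
    unfolding x_def a_def fbm_cov_def
    apply (simp only: sum.insert_remove finite.intros sum.empty insert_iff empty_iff singleton_iff)
    apply (simp only: f1 f2 diff_self abs_zero if_True if_False)
    apply (simp add: field_simps power2_eq_square)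
    using f3 by simp
qed

lemma Z_gauss:
  assumes fbm: "is_fbm M H B" and H: "H > 0"
    and Zdef: "\<And>\<omega> t. Z \<omega> t = B \<omega> (c*t) - B \<omega> (c*t - 1)"
  shows "gaussian_rv M (\<lambda>\<omega>. Z \<omega> s + b * Z \<omega> u) 0 (1 + b\<^sup>2 + 2 * b * gammaZ H c (s - u))"
proof -
  define x where "x = (\<lambda>i::nat. if i = 0 then c * s else if i = (1::nat) then c * s - 1 else if i = 2 then c * u else c * u - 1)"
  define a where "a = (\<lambda>i::nat. if i = 0 then 1 else if i = 1 then -1 else if i = 2 then b else - b)"
  have G: "gaussian_rv M (\<lambda>\<omega>. \<Sum>i\<in>{0,1,2,3}. a i * B \<omega> (x i)) 0
           (\<Sum>i\<in>{0,1,2,3}. \<Sum>j\<in>{0,1,2,3}. a i * a j * fbm_cov H (x i) (x j))"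
    by (rule fbm_lincomb[OF fbm]) simp
  have e1: "(\<lambda>\<omega>. \<Sum>i\<in>{0,1,2,3}. a i * B \<omega> (x i)) = (\<lambda>\<omega>. Z \<omega> s + b * Z \<omega> u)"
    by (simp add: a_def x_def Zdef algebra_simps)
  have e2: "(\<Sum>i\<in>{0,1,2,3}. \<Sum>j\<in>{0,1,2,3}. a i * a j * fbm_cov H (x i) (x j))
       = 1 + b\<^sup>2 + 2 * b * gammaZ H c (s - u)"
    using cov4[OF H, where P="c * s" and Q="c * u" and b=b] unfolding a_def x_def gammaZ_def
    by (simp add: right_diff_distrib)
  show ?thesis using G unfolding e1 e2 .
qed

lemma Z_gauss1:
  assumes "is_fbm M H B" "H > 0" "\<And>\<omega> t. Z \<omega> t = B \<omega> (c*t) - B \<omega> (c*t - 1)"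
  shows "gaussian_rv M (\<lambda>\<omega>. Z \<omega> s) 0 1"
  using Z_gauss[OF assms, of s 0 s] by simp

lemma Z_gauss2:
  assumes "is_fbm M H B" "H > 0" "\<And>\<omega> t. Z \<omega> t = B \<omega> (c*t) - B \<omega> (c*t - 1)"
  shows "gaussian_rv M (\<lambda>\<omega>. Z \<omega> s + Z \<omega> u) 0 (2 + 2 * gammaZ H c (s - u))"
  using Z_gauss[OF assms, of s 1 u] by simp

lemma joint_meas:
  fixes X :: "'a \<Rightarrow> real \<Rightarrow> real"
  assumes m: "\<And>s. (\<lambda>\<omega>. X \<omega> s) \<in> borel_measurable M"
    and c: "\<And>\<omega>. \<omega> \<in> space M \<Longrightarrow> continuous_on UNIV (X \<omega>)"
  shows "(\<lambda>p. X (fst p) (snd p)) \<in> borel_measurable (M \<Otimes>\<^sub>M lborel)"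
proof (rule borel_measurable_LIMSEQ_real)
  let ?g = "\<lambda>n::nat. \<lambda>s::real. real_of_int \<lfloor>real (Suc n) * s\<rfloor> / real (Suc n)"
  show "(\<lambda>p. X (fst p) (?g n (snd p))) \<in> borel_measurable (M \<Otimes>\<^sub>M lborel)" for n
  proof -
    have "(\<lambda>p. (\<lambda>k::int. \<lambda>p. X (fst p) (real_of_int k / real (Suc n))) (\<lfloor>real (Suc n) * snd p\<rfloor>) p)
          \<in> borel_measurable (M \<Otimes>\<^sub>M lborel)"
    proof (rule measurable_compose_countable[where f="\<lambda>k p. X (fst p) (real_of_int k / real (Suc n))"])
      show "(\<lambda>p. X (fst p) (real_of_int k / real (Suc n))) \<in> borel_measurable (M \<Otimes>\<^sub>M lborel)" for k
        by (rule measurable_compose[OF measurable_fst m])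
      show "(\<lambda>p. \<lfloor>real (Suc n) * snd p\<rfloor>) \<in> measurable (M \<Otimes>\<^sub>M lborel) (count_space UNIV)"
        by measurable
    qed
    then show ?thesis by simp
  qed
  show "(\<lambda>n. X (fst p) (?g n (snd p))) \<longlonglongrightarrow> X (fst p) (snd p)" if p: "p \<in> space (M \<Otimes>\<^sub>M lborel)" for p
  proof -
    have om: "fst p \<in> space M" using p by (auto simp: space_pair_measure)
    have up: "?g n (snd p) \<le> snd p" for n
      using of_int_floor_le[of "real (Suc n) * snd p"] by (simp add: field_simps)
    have lo: "snd p - 1 / real (Suc n) \<le> ?g n (snd p)" for n
    proof -
      have N: "real (Suc n) > 0" by simp
      have "real (Suc n) * snd p - 1 \<le> real_of_int \<lfloor>real (Suc n) * snd p\<rfloor>"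
        using real_of_int_floor_gt_diff_one[of "real (Suc n) * snd p"] by linarith
      then have "(real (Suc n) * snd p - 1) / real (Suc n) \<le> real_of_int \<lfloor>real (Suc n) * snd p\<rfloor> / real (Suc n)"
        using N by (intro divide_right_mono) auto
      moreover have "(real (Suc n) * snd p - 1) / real (Suc n) = snd p - 1 / real (Suc n)"
        using N by (simp add: field_simps)
      ultimately show ?thesis by simp
    qed
    have lim: "(\<lambda>n. snd p - 1 / real (Suc n)) \<longlonglongrightarrow> snd p"
      using tendsto_diff[OF tendsto_const LIMSEQ_inverse_real_of_nat] by (simp add: inverse_eq_divide)
    have "(\<lambda>n. ?g n (snd p)) \<longlonglongrightarrow> snd p"
      by (rule real_tendsto_sandwich[OF always_eventually always_eventually lim tendsto_const]) (use lo up in auto)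
    moreover have "isCont (X (fst p)) (snd p)"
      using c[OF om] by (simp add: continuous_on_eq_continuous_at)
    ultimately show ?thesis by (rule isCont_tendsto_compose[rotated])
  qed
qed

lemma LBINT_nn:
  fixes g :: "real \<Rightarrow> real"
  assumes "a \<le> b" "continuous_on UNIV g" "\<And>x. g x \<ge> 0"
  shows "integrable lborel (\<lambda>s. indicator {a<..<b} s * g s)"
    "ennreal (LBINT s=a..b. g s) = (\<integral>\<^sup>+s. ennreal (indicator {a<..<b} s * g s) \<partial>lborel)"
    "(LBINT s=a..b. g s) = (\<integral>s. indicator {a<..<b} s * g s \<partial>lborel)"
proof -
  have "interval_lebesgue_integrable lborel (ereal a) (ereal b) g"
    using assms(2) by (intro interval_integrable_isCont) (simp add: continuous_on_eq_continuous_at)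
  then show I: "integrable lborel (\<lambda>s. indicator {a<..<b} s * g s)"
    using assms(1) by (simp add: interval_lebesgue_integrable_def set_integrable_def)
  show e: "(LBINT s=a..b. g s) = (\<integral>s. indicator {a<..<b} s * g s \<partial>lborel)"
    using assms(1) by (simp add: interval_lebesgue_integral_le_eq set_lebesgue_integral_def)
  show "ennreal (LBINT s=a..b. g s) = (\<integral>\<^sup>+s. ennreal (indicator {a<..<b} s * g s) \<partial>lborel)"
    unfolding e using assms(3) by (intro nn_integral_eq_integral[symmetric] I) (auto simp: indicator_def)
qed

lemma L_first:
  fixes Z :: "'a \<Rightarrow> real \<Rightarrow> real" and a b lam :: real
  assumes P: "prob_space M" and ab: "a \<le> b" and lam: "lam > 0"
    and Zm: "\<And>s. (\<lambda>\<omega>. Z \<omega> s) \<in> borel_measurable M"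
    and Zc: "\<And>\<omega>. \<omega> \<in> space M \<Longrightarrow> continuous_on UNIV (Z \<omega>)"
    and E1: "\<And>s. (\<integral>\<^sup>+\<omega>. ennreal (exp (Z \<omega> s)) \<partial>M) = ennreal (exp (1/2))"
  defines "L \<equiv> (\<lambda>\<omega>. LBINT s=a..b. lam * exp (Z \<omega> s))"
  shows "L \<in> borel_measurable M" "integrable M L" "(\<integral>\<omega>. L \<omega> \<partial>M) = lam * exp (1/2) * (b - a)"
proof -
  interpret prob_space M by fact
  interpret PS: pair_sigma_finite M lborel by unfold_locales
  have jm: "(\<lambda>p. Z (fst p) (snd p)) \<in> borel_measurable (M \<Otimes>\<^sub>M lborel)"
    by (rule joint_meas[OF Zm Zc])
  define ind where "ind s = (indicator {a<..<b} s :: real)" for s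
  have indm[measurable]: "ind \<in> borel_measurable lborel" unfolding ind_def by measurable
  define F where "F p = ind (snd p) * (lam * exp (Z (fst p) (snd p)))" for p
  have Fm[measurable]: "F \<in> borel_measurable (M \<Otimes>\<^sub>M lborel)"
  proof -
    have "(\<lambda>p. exp (Z (fst p) (snd p))) \<in> borel_measurable (M \<Otimes>\<^sub>M lborel)"
      using measurable_compose[OF jm borel_measurable_exp] by (simp add: comp_def)
    moreover have "(\<lambda>p. ind (snd p)) \<in> borel_measurable (M \<Otimes>\<^sub>M lborel)"
      using measurable_compose[OF measurable_snd indm] by (simp add: comp_def)
    ultimately show ?thesis unfolding F_def by measurable
  qed
  have Lrep: "L \<omega> = (\<integral>s. F (\<omega>, s) \<partial>lborel)" if "\<omega> \<in> space M" for \<omega>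
    unfolding L_def F_def ind_def fst_conv snd_conv
    by (rule LBINT_nn(3)[OF ab]) (use Zc[OF that] lam in \<open>auto intro!: continuous_intros\<close>)
  have Lnn: "ennreal (L \<omega>) = (\<integral>\<^sup>+s. ennreal (F (\<omega>, s)) \<partial>lborel)" if "\<omega> \<in> space M" for \<omega>
    unfolding L_def F_def ind_def fst_conv snd_conv
    by (rule LBINT_nn(2)[OF ab]) (use Zc[OF that] lam in \<open>auto intro!: continuous_intros\<close>)
  show Lm: "L \<in> borel_measurable M"
  proof -
    have "(\<lambda>\<omega>. \<integral>s. F (\<omega>, s) \<partial>lborel) \<in> borel_measurable M" by measurable
    then show ?thesis by (rule measurable_cong[THEN iffD1, rotated]) (simp add: Lrep)
  qed
  have Lpos: "L \<omega> \<ge> 0" if "\<omega> \<in> space M" for \<omega>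
    unfolding Lrep[OF that] F_def ind_def by (intro integral_nonneg_AE) (use lam in \<open>auto simp: indicator_def\<close>)
  have "(\<integral>\<^sup>+\<omega>. ennreal (L \<omega>) \<partial>M) = (\<integral>\<^sup>+\<omega>. (\<integral>\<^sup>+s. ennreal (F (\<omega>, s)) \<partial>lborel) \<partial>M)"
    by (intro nn_integral_cong) (simp add: Lnn)
  also have "\<dots> = (\<integral>\<^sup>+s. (\<integral>\<^sup>+\<omega>. ennreal (F (\<omega>, s)) \<partial>M) \<partial>lborel)"
    by (rule PS.Fubini[symmetric]) measurable
  also have "\<dots> = (\<integral>\<^sup>+s. ennreal (ind s * lam) * ennreal (exp (1/2)) \<partial>lborel)"
  proof (intro nn_integral_cong)
    fix s
    have "(\<integral>\<^sup>+\<omega>. ennreal (F (\<omega>, s)) \<partial>M) = (\<integral>\<^sup>+\<omega>. ennreal (ind s * lam) * ennreal (exp (Z \<omega> s)) \<partial>M)"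
      unfolding F_def by (intro nn_integral_cong) (auto simp: ind_def indicator_def ennreal_mult less_imp_le[OF lam])
    also have "\<dots> = ennreal (ind s * lam) * ennreal (exp (1/2))"
      by (subst nn_integral_cmult) (simp_all add: E1 measurable_compose[OF Zm borel_measurable_exp])
    finally show "(\<integral>\<^sup>+\<omega>. ennreal (F (\<omega>, s)) \<partial>M) = ennreal (ind s * lam) * ennreal (exp (1/2))" .
  qed
  also have "\<dots> = (\<integral>\<^sup>+s. ennreal (lam * exp (1/2)) * indicator {a<..<b} s \<partial>lborel)"
    by (intro nn_integral_cong) (auto simp: ind_def indicator_def ennreal_mult'' lam)
  also have "\<dots> = ennreal (lam * exp (1/2) * (b - a))"
    using ab lam by (simp add: nn_integral_cmult ennreal_mult'')
  finally have EL: "(\<integral>\<^sup>+\<omega>. ennreal (L \<omega>) \<partial>M) = ennreal (lam * exp (1/2) * (b - a))" .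
  show IL: "integrable M L"
    by (rule integrableI_nn_integral_finite[OF Lm _ EL]) (simp add: Lpos)
  have "ennreal (\<integral>\<omega>. L \<omega> \<partial>M) = ennreal (lam * exp (1/2) * (b - a))"
    using nn_integral_eq_integral[OF IL] EL Lpos by simp
  then show "(\<integral>\<omega>. L \<omega> \<partial>M) = lam * exp (1/2) * (b - a)"
    using ab lam by (subst (asm) ennreal_inj) (auto intro!: integral_nonneg_AE simp: Lpos)
qed

lemma Q_nn:
  fixes k :: "real \<Rightarrow> real" and a b :: real
  assumes ab: "a \<le> b" and kc: "continuous_on UNIV k" and kpos: "\<And>x. k x \<ge> 0"
  shows "ennreal (LBINT s=a..b. (LBINT u=a..b. k (s - u))) =
     (\<integral>\<^sup>+s. (\<integral>\<^sup>+u. ennreal (indicator {a<..<b} s * indicator {a<..<b} u * k (s - u)) \<partial>lborel) \<partial>lborel)"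
    and "interval_lebesgue_integrable lborel a b (\<lambda>s. LBINT u=a..b. k (s - u))"
proof -
  define ind where "ind s = (indicator {a<..<b} s :: real)" for s
  have indm[measurable]: "ind \<in> borel_measurable borel" unfolding ind_def by measurable
  have km[measurable]: "k \<in> borel_measurable borel" using kc by (rule borel_measurable_continuous_onI)
  have kcs: "continuous_on UNIV (\<lambda>u. k (s - u))" for s
    by (rule continuous_on_compose2[OF kc]) (auto intro!: continuous_intros)
  define G where "G s = (LBINT u=a..b. k (s - u))" for s
  have G3: "G s = (\<integral>u. ind u * k (s - u) \<partial>lborel)" for s
    unfolding G_def ind_def by (rule LBINT_nn(3)[OF ab kcs kpos])
  have G2: "ennreal (G s) = (\<integral>\<^sup>+u. ennreal (ind u * k (s - u)) \<partial>lborel)" for s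
    unfolding G_def ind_def by (rule LBINT_nn(2)[OF ab kcs kpos])
  have Gpos: "G s \<ge> 0" for s
    unfolding G3 ind_def by (intro integral_nonneg_AE) (auto simp: indicator_def kpos)
  have Gm: "G \<in> borel_measurable lborel"
  proof -
    have "(\<lambda>s. \<integral>u. ind u * k (s - u) \<partial>lborel) \<in> borel_measurable lborel" by measurable
    then show ?thesis by (simp add: G3[abs_def])
  qed
  obtain C where C: "\<And>r. r \<in> {a - b..b - a} \<Longrightarrow> k r \<le> C"
  proof -
    have "\<exists>x\<in>{a - b..b - a}. \<forall>y\<in>{a - b..b - a}. k y \<le> k x"
      by (rule continuous_attains_sup) (use ab continuous_on_subset[OF kc] in auto)
    then show ?thesis using that by blast
  qed
  have NQ: "(\<integral>\<^sup>+s. ennreal (ind s * G s) \<partial>lborel) =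
     (\<integral>\<^sup>+s. (\<integral>\<^sup>+u. ennreal (ind s * ind u * k (s - u)) \<partial>lborel) \<partial>lborel)"
  proof (intro nn_integral_cong)
    fix s
    have "ennreal (ind s * G s) = ennreal (ind s) * ennreal (G s)"
      by (simp add: ind_def ennreal_mult Gpos)
    also have "\<dots> = (\<integral>\<^sup>+u. ennreal (ind s) * ennreal (ind u * k (s - u)) \<partial>lborel)"
      unfolding G2 by (rule nn_integral_cmult[symmetric]) measurable
    also have "\<dots> = (\<integral>\<^sup>+u. ennreal (ind s * ind u * k (s - u)) \<partial>lborel)"
      by (intro nn_integral_cong) (simp add: ind_def ennreal_mult[symmetric] kpos mult.assoc)
    finally show "ennreal (ind s * G s) = (\<integral>\<^sup>+u. ennreal (ind s * ind u * k (s - u)) \<partial>lborel)" .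
  qed
  have bound: "(\<integral>\<^sup>+s. (\<integral>\<^sup>+u. ennreal (ind s * ind u * k (s - u)) \<partial>lborel) \<partial>lborel)
      \<le> (\<integral>\<^sup>+s. (\<integral>\<^sup>+u. ennreal (C * ind s * ind u) \<partial>lborel) \<partial>lborel)"
  proof (intro nn_integral_mono ennreal_leI)
    fix s u
    show "ind s * ind u * k (s - u) \<le> C * ind s * ind u"
      using C[of "s - u"] by (auto simp: ind_def indicator_def)
  qed
  also have "\<dots> < \<infinity>"
  proof -
    have "(\<integral>\<^sup>+s. (\<integral>\<^sup>+u. ennreal (C * ind s * ind u) \<partial>lborel) \<partial>lborel)
       \<le> (\<integral>\<^sup>+s. (\<integral>\<^sup>+u. ennreal \<bar>C\<bar> * indicator {a<..<b} s * indicator {a<..<b} u \<partial>lborel) \<partial>lborel)"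
      by (intro nn_integral_mono) (auto simp: ind_def indicator_def ennreal_leI)
    also have "\<dots> = ennreal \<bar>C\<bar> * ennreal (b - a) * ennreal (b - a)"
      using ab by (simp add: nn_integral_cmult nn_integral_multc)
    also have "\<dots> < \<infinity>" by (simp add: ennreal_mult_less_top)
    finally show ?thesis .
  qed
  finally have fin: "(\<integral>\<^sup>+s. ennreal (ind s * G s) \<partial>lborel) < \<infinity>" unfolding NQ .
  have IG: "integrable lborel (\<lambda>s. ind s * G s)"
  proof (rule integrableI_nn_integral_finite)
    show "(\<lambda>s. ind s * G s) \<in> borel_measurable lborel" using Gm by measurable
    show "AE x in lborel. 0 \<le> ind x * G x" by (simp add: ind_def Gpos)
    show "(\<integral>\<^sup>+s. ennreal (ind s * G s) \<partial>lborel) = ennreal (enn2real (\<integral>\<^sup>+s. ennreal (ind s * G s) \<partial>lborel))"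
      using fin by (simp add: ennreal_enn2real_if)
  qed
  have "(LBINT s=a..b. G s) = (\<integral>s. ind s * G s \<partial>lborel)"
    using ab by (simp add: interval_lebesgue_integral_le_eq set_lebesgue_integral_def ind_def)
  then have "ennreal (LBINT s=a..b. G s) = (\<integral>\<^sup>+s. ennreal (ind s * G s) \<partial>lborel)"
    using nn_integral_eq_integral[OF IG] by (simp add: ind_def Gpos)
  then show "ennreal (LBINT s=a..b. (LBINT u=a..b. k (s - u))) =
     (\<integral>\<^sup>+s. (\<integral>\<^sup>+u. ennreal (indicator {a<..<b} s * indicator {a<..<b} u * k (s - u)) \<partial>lborel) \<partial>lborel)"
    using NQ unfolding G_def ind_def by simp
  show "interval_lebesgue_integrable lborel a b (\<lambda>s. LBINT u=a..b. k (s - u))"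
    using IG ab unfolding G_def[symmetric] ind_def by (simp add: interval_lebesgue_integrable_def set_integrable_def)
qed

lemma LBINT_nonneg:
  fixes a b :: real and f :: "real \<Rightarrow> real"
  assumes "a \<le> b" "\<And>x. f x \<ge> 0"
  shows "(LBINT x=a..b. f x) \<ge> 0"
  using assms by (simp add: interval_lebesgue_integral_le_eq set_lebesgue_integral_def indicator_def integral_nonneg_AE)

lemma L_second:
  fixes Z :: "'a \<Rightarrow> real \<Rightarrow> real" and a b lam :: real and k :: "real \<Rightarrow> real"
  assumes P: "prob_space M" and ab: "a \<le> b" and lam: "lam > 0"
    and Zm: "\<And>s. (\<lambda>\<omega>. Z \<omega> s) \<in> borel_measurable M"
    and Zc: "\<And>\<omega>. \<omega> \<in> space M \<Longrightarrow> continuous_on UNIV (Z \<omega>)"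
    and E2: "\<And>s u. (\<integral>\<^sup>+\<omega>. ennreal (exp (Z \<omega> s + Z \<omega> u)) \<partial>M) = ennreal (exp 1 * k (s - u))"
    and kc: "continuous_on UNIV k" and kpos: "\<And>x. k x \<ge> 0"
  defines "L \<equiv> (\<lambda>\<omega>. LBINT s=a..b. lam * exp (Z \<omega> s))"
  shows "integrable M (\<lambda>\<omega>. (L \<omega>)\<^sup>2)"
    "(\<integral>\<omega>. (L \<omega>)\<^sup>2 \<partial>M) = lam\<^sup>2 * exp 1 * (LBINT s=a..b. (LBINT u=a..b. k (s - u)))"
proof -
  interpret prob_space M by fact
  interpret PS: pair_sigma_finite M lborel by unfold_locales
  have jm: "(\<lambda>p. Z (fst p) (snd p)) \<in> borel_measurable (M \<Otimes>\<^sub>M lborel)"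
    by (rule joint_meas[OF Zm Zc])
  define ind where "ind s = (indicator {a<..<b} s :: real)" for s
  have indm[measurable]: "ind \<in> borel_measurable lborel" unfolding ind_def by measurable
  define F where "F p = ind (snd p) * (lam * exp (Z (fst p) (snd p)))" for p
  have Fm[measurable]: "F \<in> borel_measurable (M \<Otimes>\<^sub>M lborel)"
  proof -
    have "(\<lambda>p. exp (Z (fst p) (snd p))) \<in> borel_measurable (M \<Otimes>\<^sub>M lborel)"
      using measurable_compose[OF jm borel_measurable_exp] by (simp add: comp_def)
    moreover have "(\<lambda>p. ind (snd p)) \<in> borel_measurable (M \<Otimes>\<^sub>M lborel)"
      using measurable_compose[OF measurable_snd indm] by (simp add: comp_def)
    ultimately show ?thesis unfolding F_def by measurable
  qed
  have Fpos: "F p \<ge> 0" for p using lam by (simp add: F_def ind_def)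
  have Lnn: "ennreal (L \<omega>) = (\<integral>\<^sup>+s. ennreal (F (\<omega>, s)) \<partial>lborel)" if "\<omega> \<in> space M" for \<omega>
    unfolding L_def F_def ind_def fst_conv snd_conv
    by (rule LBINT_nn(2)[OF ab]) (use Zc[OF that] lam in \<open>auto intro!: continuous_intros\<close>)
  have Lrep: "L \<omega> = (\<integral>s. F (\<omega>, s) \<partial>lborel)" if "\<omega> \<in> space M" for \<omega>
    unfolding L_def F_def ind_def fst_conv snd_conv
    by (rule LBINT_nn(3)[OF ab]) (use Zc[OF that] lam in \<open>auto intro!: continuous_intros\<close>)
  have Lm: "L \<in> borel_measurable M"
  proof -
    have "(\<lambda>\<omega>. \<integral>s. F (\<omega>, s) \<partial>lborel) \<in> borel_measurable M" by measurable
    then show ?thesis by (rule measurable_cong[THEN iffD1, rotated]) (simp add: Lrep)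
  qed
  have Lpos: "L \<omega> \<ge> 0" for \<omega>
    unfolding L_def using ab lam by (intro LBINT_nonneg) auto
  have Qpos: "(LBINT s=a..b. (LBINT u=a..b. k (s - u))) \<ge> 0"
    using ab by (intro LBINT_nonneg) (auto simp: kpos)
  define G where "G q = ennreal (F (fst q) * F (fst (fst q), snd q))" for q :: "('a \<times> real) \<times> real"
  have Gm[measurable]: "G \<in> borel_measurable ((M \<Otimes>\<^sub>M lborel) \<Otimes>\<^sub>M lborel)"
  proof -
    have "(\<lambda>q::('a \<times> real) \<times> real. F (fst (fst q), snd q)) \<in> borel_measurable ((M \<Otimes>\<^sub>M lborel) \<Otimes>\<^sub>M lborel)"
      by (rule measurable_compose[OF _ Fm]) measurable
    moreover have "(\<lambda>q::('a \<times> real) \<times> real. F (fst q)) \<in> borel_measurable ((M \<Otimes>\<^sub>M lborel) \<Otimes>\<^sub>M lborel)"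
      by (rule measurable_compose[OF _ Fm]) measurable
    ultimately show ?thesis unfolding G_def by measurable
  qed
  have L2: "ennreal ((L \<omega>)\<^sup>2) = (\<integral>\<^sup>+s. (\<integral>\<^sup>+u. G ((\<omega>, s), u) \<partial>lborel) \<partial>lborel)" if "\<omega> \<in> space M" for \<omega>
  proof -
    have Fs: "(\<lambda>s. ennreal (F (\<omega>, s))) \<in> borel_measurable lborel"
      using that by measurable
    have "ennreal ((L \<omega>)\<^sup>2) = ennreal (L \<omega>) * ennreal (L \<omega>)"
      by (simp add: power2_eq_square ennreal_mult Lpos)
    also have "\<dots> = (\<integral>\<^sup>+s. ennreal (F (\<omega>, s)) \<partial>lborel) * ennreal (L \<omega>)"
      by (subst (1) Lnn[OF that]) simp
    also have "\<dots> = (\<integral>\<^sup>+s. ennreal (F (\<omega>, s)) * ennreal (L \<omega>) \<partial>lborel)"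
      by (rule nn_integral_multc[symmetric, OF Fs])
    also have "\<dots> = (\<integral>\<^sup>+s. (\<integral>\<^sup>+u. ennreal (F (\<omega>, s)) * ennreal (F (\<omega>, u)) \<partial>lborel) \<partial>lborel)"
      by (intro nn_integral_cong) (simp add: Lnn[OF that] nn_integral_cmult[symmetric, OF Fs])
    also have "\<dots> = (\<integral>\<^sup>+s. (\<integral>\<^sup>+u. G ((\<omega>, s), u) \<partial>lborel) \<partial>lborel)"
      by (intro nn_integral_cong) (simp add: G_def ennreal_mult Fpos)
    finally show ?thesis .
  qed
  have inner: "(\<integral>\<^sup>+\<omega>. G ((\<omega>, s), u) \<partial>M) = ennreal (lam\<^sup>2 * exp 1 * (ind s * ind u * k (s - u)))" for s u
  proof -
    have "(\<integral>\<^sup>+\<omega>. G ((\<omega>, s), u) \<partial>M) = (\<integral>\<^sup>+\<omega>. ennreal (ind s * ind u * lam\<^sup>2) * ennreal (exp (Z \<omega> s + Z \<omega> u)) \<partial>M)"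
    proof (intro nn_integral_cong)
      fix \<omega>
      have "ennreal (ind s * ind u * lam\<^sup>2) * ennreal (exp (Z \<omega> s + Z \<omega> u)) = ennreal (ind s * ind u * lam\<^sup>2 * exp (Z \<omega> s + Z \<omega> u))"
        by (rule ennreal_mult[symmetric]) (auto simp: ind_def)
      then show "G ((\<omega>, s), u) = ennreal (ind s * ind u * lam\<^sup>2) * ennreal (exp (Z \<omega> s + Z \<omega> u))"
        by (simp add: G_def F_def exp_add power2_eq_square mult_ac)
    qed
    also have "\<dots> = ennreal (ind s * ind u * lam\<^sup>2) * ennreal (exp 1 * k (s - u))"
      by (subst nn_integral_cmult) (simp_all add: E2 measurable_compose[OF borel_measurable_add[OF Zm Zm] borel_measurable_exp, unfolded comp_def])
    also have "\<dots> = ennreal (lam\<^sup>2 * exp 1 * (ind s * ind u * k (s - u)))"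
      by (simp add: ennreal_mult[symmetric] ind_def kpos mult_ac)
    finally show ?thesis .
  qed
  have "(\<integral>\<^sup>+\<omega>. ennreal ((L \<omega>)\<^sup>2) \<partial>M) = (\<integral>\<^sup>+\<omega>. (\<integral>\<^sup>+s. (\<integral>\<^sup>+u. G ((\<omega>, s), u) \<partial>lborel) \<partial>lborel) \<partial>M)"
    by (intro nn_integral_cong) (simp add: L2)
  also have "\<dots> = (\<integral>\<^sup>+s. (\<integral>\<^sup>+\<omega>. (\<integral>\<^sup>+u. G ((\<omega>, s), u) \<partial>lborel) \<partial>M) \<partial>lborel)"
    by (rule PS.Fubini[symmetric]) measurable
  also have "\<dots> = (\<integral>\<^sup>+s. (\<integral>\<^sup>+u. (\<integral>\<^sup>+\<omega>. G ((\<omega>, s), u) \<partial>M) \<partial>lborel) \<partial>lborel)"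
  proof (intro nn_integral_cong)
    fix s
    have "(\<lambda>p. G ((fst p, s), snd p)) \<in> borel_measurable (M \<Otimes>\<^sub>M lborel)"
      by (rule measurable_compose[OF _ Gm]) measurable
    then show "(\<integral>\<^sup>+\<omega>. (\<integral>\<^sup>+u. G ((\<omega>, s), u) \<partial>lborel) \<partial>M) = (\<integral>\<^sup>+u. (\<integral>\<^sup>+\<omega>. G ((\<omega>, s), u) \<partial>M) \<partial>lborel)"
      using PS.Fubini[of "\<lambda>p. G ((fst p, s), snd p)"] by simp
  qed
  also have "\<dots> = (\<integral>\<^sup>+s. (\<integral>\<^sup>+u. ennreal (lam\<^sup>2 * exp 1) * ennreal (ind s * ind u * k (s - u)) \<partial>lborel) \<partial>lborel)"
    unfolding inner by (intro nn_integral_cong) (simp add: ennreal_mult ind_def kpos)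
  also have "\<dots> = ennreal (lam\<^sup>2 * exp 1) * (\<integral>\<^sup>+s. (\<integral>\<^sup>+u. ennreal (ind s * ind u * k (s - u)) \<partial>lborel) \<partial>lborel)"
  proof -
    have km[measurable]: "k \<in> borel_measurable borel" using kc by (rule borel_measurable_continuous_onI)
    show ?thesis
      by (subst nn_integral_cmult[symmetric], measurable, intro nn_integral_cong, subst nn_integral_cmult[symmetric]) auto
  qed
  also have "\<dots> = ennreal (lam\<^sup>2 * exp 1 * (LBINT s=a..b. (LBINT u=a..b. k (s - u))))"
    unfolding ind_def Q_nn(1)[OF ab kc kpos, symmetric]
    using Qpos by (simp add: ennreal_mult)
  finally have EL2: "(\<integral>\<^sup>+\<omega>. ennreal ((L \<omega>)\<^sup>2) \<partial>M) = ennreal (lam\<^sup>2 * exp 1 * (LBINT s=a..b. (LBINT u=a..b. k (s - u))))" .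
  show IL: "integrable M (\<lambda>\<omega>. (L \<omega>)\<^sup>2)"
    by (rule integrableI_nn_integral_finite[OF _ _ EL2]) (use Lm in simp_all)
  have "ennreal (\<integral>\<omega>. (L \<omega>)\<^sup>2 \<partial>M) = ennreal (lam\<^sup>2 * exp 1 * (LBINT s=a..b. (LBINT u=a..b. k (s - u))))"
    using nn_integral_eq_integral[OF IL] EL2 by simp
  then show "(\<integral>\<omega>. (L \<omega>)\<^sup>2 \<partial>M) = lam\<^sup>2 * exp 1 * (LBINT s=a..b. (LBINT u=a..b. k (s - u)))"
    using Qpos by (subst (asm) ennreal_inj) (auto intro!: integral_nonneg_AE)
qed

lemma ereal_m1: "ereal (-1) = -1" by (simp add: one_ereal_def)

lemma einterval_m1_0[simp]: "einterval (-1) 0 = {-1<..<(0::real)}"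
  using einterval_eq_Icc[of "-1" 0] by (simp add: ereal_m1 zero_ereal_def)

lemma const_m1_0: "interval_lebesgue_integrable lborel (-1) 0 (\<lambda>x. 1::real)" "(LBINT x=-1..0. (1::real)) = 1"
  using interval_integral_const[of "-1" 0 1] by (simp_all add: ereal_m1 zero_ereal_def)

lemma Q_shift:
  fixes k :: "real \<Rightarrow> real" and a :: real
  shows "(LBINT s=a..a+1. (LBINT u=a..a+1. k (s - u))) = (LBINT s=-1..0. (LBINT u=-1..0. k (s - u)))"
proof -
  have inner: "(LBINT u=a..a+1. k (a + 1 + x - u)) = (LBINT u=-1..0. k (x - u))" for x
  proof -
    have "(LBINT u=a..a+1. k (a + 1 + x - u)) = (\<integral>u. indicator {a<..<a+1} u * k (a + 1 + x - u) \<partial>lborel)"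
      by (simp add: interval_lebesgue_integral_le_eq set_lebesgue_integral_def)
    also have "\<dots> = (\<integral>u. indicator {a<..<a+1} (a + 1 + u) * k (a + 1 + x - (a + 1 + u)) \<partial>lborel)"
      using lborel_integral_real_affine[of 1 "\<lambda>u. indicator {a<..<a+1} u * k (a + 1 + x - u)" "a + 1"] by simp
    also have "\<dots> = (\<integral>u. indicator {-1<..<0} u * k (x - u) \<partial>lborel)"
      by (intro Bochner_Integration.integral_cong) (auto simp: indicator_def)
    also have "\<dots> = (LBINT u=-1..0. k (x - u))"
      by (simp add: interval_lebesgue_integral_le_eq set_lebesgue_integral_def)
    finally show ?thesis .
  qed
  have "(LBINT s=a..a+1. (LBINT u=a..a+1. k (s - u))) = (\<integral>s. indicator {a<..<a+1} s * (LBINT u=a..a+1. k (s - u)) \<partial>lborel)"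
    by (simp add: interval_lebesgue_integral_le_eq set_lebesgue_integral_def)
  also have "\<dots> = (\<integral>s. indicator {a<..<a+1} (a + 1 + s) * (LBINT u=a..a+1. k (a + 1 + s - u)) \<partial>lborel)"
    using lborel_integral_real_affine[of 1 "\<lambda>s. indicator {a<..<a+1} s * (LBINT u=a..a+1. k (s - u))" "a + 1"] by simp
  also have "\<dots> = (\<integral>s. indicator {-1<..<0} s * (LBINT u=-1..0. k (s - u)) \<partial>lborel)"
    unfolding inner by (intro Bochner_Integration.integral_cong) (auto simp: indicator_def)
  also have "\<dots> = (LBINT s=-1..0. (LBINT u=-1..0. k (s - u)))"
    by (simp add: interval_lebesgue_integral_le_eq set_lebesgue_integral_def)
  finally show ?thesis .
qed

lemma Q_minus1:
  fixes k :: "real \<Rightarrow> real"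
  assumes kc: "continuous_on UNIV k" and kpos: "\<And>x. k x \<ge> 0"
  shows "(LBINT s=-1..0. (LBINT u=-1..0. k (s - u) - 1)) = (LBINT s=-1..0. (LBINT u=-1..0. k (s - u))) - 1"
proof -
  have kcs: "continuous_on UNIV (\<lambda>u. k (s - u))" for s
    by (rule continuous_on_compose2[OF kc]) (auto intro!: continuous_intros)
  have Ik: "interval_lebesgue_integrable lborel (-1) 0 (\<lambda>u. k (s - u))" for s
    using kcs[of s] interval_integrable_isCont[of "-1" 0 "\<lambda>u. k (s - u)"]
    by (simp add: continuous_on_eq_continuous_at ereal_m1 zero_ereal_def)
  have "(LBINT u=-1..0. k (s - u) - 1) = (LBINT u=-1..0. k (s - u)) - 1" for s
    using interval_lebesgue_integral_diff(2)[OF Ik[of s] const_m1_0(1)] const_m1_0(2) by simp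
  then have "(LBINT s=-1..0. (LBINT u=-1..0. k (s - u) - 1)) = (LBINT s=-1..0. (LBINT u=-1..0. k (s - u)) - 1)"
    by simp
  also have "\<dots> = (LBINT s=-1..0. (LBINT u=-1..0. k (s - u))) - 1"
  proof -
    have I: "interval_lebesgue_integrable lborel (-1) 0 (\<lambda>s. LBINT u=-1..0. k (s - u))"
      using Q_nn(2)[of "-1" 0 k, OF _ kc kpos] by (simp add: ereal_m1 zero_ereal_def)
    show ?thesis
      using interval_lebesgue_integral_diff(2)[OF I const_m1_0(1)] const_m1_0(2) by simp
  qed
  finally show ?thesis .
qed

definition Kset :: "real set \<Rightarrow> (int \<Rightarrow> real) \<Rightarrow> int set" where
  "Kset A \<tau> = {k. \<tau> k \<in> A}"

definition gfin :: "real set \<Rightarrow> (int \<Rightarrow> real) \<Rightarrow> int set" where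
  "gfin A \<tau> = (if finite (Kset A \<tau>) then Kset A \<tau> else {})"

abbreviation "PT \<equiv> (Pi\<^sub>M (UNIV :: int set) (\<lambda>_. (borel :: real measure)))"

lemma gfin_finite[simp]: "finite (gfin A \<tau>)"
  by (simp add: gfin_def)

lemma card_gfin: "card (Kset A \<tau>) = card (gfin A \<tau>)"
  by (simp add: gfin_def)

lemma sum_gfin: "(\<Sum>k\<in>Kset A \<tau>. f k) = (\<Sum>k\<in>gfin A \<tau>. f k)"
  by (simp add: gfin_def)

lemma gfin_meas:
  assumes A: "A \<in> sets borel"
  shows "gfin A \<in> measurable PT (count_space {J. finite J})"
proof (rule measurable_count_space_eq_countable[THEN iffD2, OF countable_Collect_finite], intro conjI)
  show "gfin A \<in> space PT \<rightarrow> {J. finite J}" by simp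
  show "\<forall>J\<in>{J. finite J}. gfin A -` {J} \<inter> space PT \<in> sets PT"
  proof
    fix J :: "int set" assume "J \<in> {J. finite J}"
    have m1: "{\<tau> \<in> space PT. \<forall>k::int. (\<tau> k \<in> A) = (k \<in> J)} \<in> sets PT"
      using A by measurable
    have m2: "{\<tau> \<in> space PT. \<forall>m::int. \<exists>k::int. \<bar>k\<bar> > m \<and> \<tau> k \<in> A} \<in> sets PT"
      using A by measurable
    have eq1: "Kset A \<tau> = J \<longleftrightarrow> (\<forall>k::int. (\<tau> k \<in> A) = (k \<in> J))" for \<tau>
      by (auto simp: Kset_def)
    have eq2: "infinite (Kset A \<tau>) \<longleftrightarrow> (\<forall>m::int. \<exists>k::int. \<bar>k\<bar> > m \<and> \<tau> k \<in> A)" for \<tau>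
      by (simp add: infinite_int_iff_unbounded Kset_def)
    have "gfin A -` {J} \<inter> space PT =
        {\<tau> \<in> space PT. \<forall>k::int. (\<tau> k \<in> A) = (k \<in> J)} \<union>
        (if J = {} then {\<tau> \<in> space PT. \<forall>m::int. \<exists>k::int. \<bar>k\<bar> > m \<and> \<tau> k \<in> A} else {})"
      using \<open>J \<in> {J. finite J}\<close> unfolding gfin_def eq1[symmetric] eq2[symmetric]
      by (auto split: if_splits)
    then show "gfin A -` {J} \<inter> space PT \<in> sets PT"
      using m1 m2 by auto
  qed
qed

lemma nn_decomp:
  fixes g :: "'a \<Rightarrow> 'i" and f1 f2 :: "'i \<Rightarrow> 'a \<Rightarrow> ennreal"
  assumes P: "prob_space M" and I: "countable I" and g: "g \<in> measurable M (count_space I)"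
    and f1: "\<And>J. J \<in> I \<Longrightarrow> f1 J \<in> borel_measurable M"
    and f2: "\<And>J. J \<in> I \<Longrightarrow> f2 J \<in> borel_measurable M"
    and eq: "\<And>J. J \<in> I \<Longrightarrow> (\<integral>\<^sup>+\<omega>. f1 J \<omega> * indicator {\<omega> \<in> space M. g \<omega> = J} \<omega> \<partial>M)
                              = (\<integral>\<^sup>+\<omega>. f2 J \<omega> * indicator {\<omega> \<in> space M. g \<omega> = J} \<omega> \<partial>M)"
  shows "(\<integral>\<^sup>+\<omega>. f1 (g \<omega>) \<omega> \<partial>M) = (\<integral>\<^sup>+\<omega>. f2 (g \<omega>) \<omega> \<partial>M)"
proof -
  interpret prob_space M by fact
  interpret C: sigma_finite_measure "count_space I" by (rule sigma_finite_measure_count_space_countable[OF I])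
  interpret PS: pair_sigma_finite M "count_space I" by unfold_locales
  have gi: "g \<omega> \<in> I" if "\<omega> \<in> space M" for \<omega> using measurable_space[OF g that] by simp
  have key: "(\<integral>\<^sup>+\<omega>. f (g \<omega>) \<omega> \<partial>M) = (\<integral>\<^sup>+J. (\<integral>\<^sup>+\<omega>. f J \<omega> * indicator {\<omega> \<in> space M. g \<omega> = J} \<omega> \<partial>M) \<partial>count_space I)"
    if fm: "\<And>J. J \<in> I \<Longrightarrow> f J \<in> borel_measurable M" for f :: "'i \<Rightarrow> 'a \<Rightarrow> ennreal"
  proof -
    define H where "H p = f (snd p) (fst p) * indicator {g (fst p)} (snd p)" for p
    have Hm: "H \<in> borel_measurable (M \<Otimes>\<^sub>M count_space I)"
    proof -
      have "(\<lambda>p. (\<lambda>J p. f J (fst p) * indicator {g (fst p)} J) (snd p) p) \<in> borel_measurable (M \<Otimes>\<^sub>M count_space I)"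
      proof (rule measurable_compose_countable'[OF _ _ I])
        show "(\<lambda>p. f J (fst p) * indicator {g (fst p)} J) \<in> borel_measurable (M \<Otimes>\<^sub>M count_space I)" if "J \<in> I" for J
        proof -
          have "{\<omega> \<in> space M. g \<omega> = J} \<in> sets M"
            using measurable_sets[OF g, of "{J}"] that by (simp add: vimage_def Int_def conj_commute)
          then have "(\<lambda>\<omega>. indicator {g \<omega>} J :: ennreal) \<in> borel_measurable M"
            by (rule borel_measurable_indicator[THEN measurable_cong[THEN iffD1, rotated]])
               (auto simp: indicator_def)
          then show ?thesis
            using fm[OF that] by measurable
        qed
        show "snd \<in> measurable (M \<Otimes>\<^sub>M count_space I) (count_space I)" by simp
      qed
      then show ?thesis by (simp add: H_def[abs_def])
    qed
    have "(\<integral>\<^sup>+\<omega>. f (g \<omega>) \<omega> \<partial>M) = (\<integral>\<^sup>+\<omega>. (\<integral>\<^sup>+J. H (\<omega>, J) \<partial>count_space I) \<partial>M)"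
    proof (intro nn_integral_cong)
      fix \<omega> assume "\<omega> \<in> space M"
      then show "f (g \<omega>) \<omega> = (\<integral>\<^sup>+J. H (\<omega>, J) \<partial>count_space I)"
        using gi by (simp add: H_def)
    qed
    also have "\<dots> = (\<integral>\<^sup>+J. (\<integral>\<^sup>+\<omega>. H (\<omega>, J) \<partial>M) \<partial>count_space I)"
      by (rule PS.Fubini[symmetric, OF Hm])
    also have "\<dots> = (\<integral>\<^sup>+J. (\<integral>\<^sup>+\<omega>. f J \<omega> * indicator {\<omega> \<in> space M. g \<omega> = J} \<omega> \<partial>M) \<partial>count_space I)"
      by (intro nn_integral_cong) (auto simp: H_def indicator_def)
    finally show ?thesis .
  qed
  have k1: "(\<integral>\<^sup>+\<omega>. f1 (g \<omega>) \<omega> \<partial>M) = (\<integral>\<^sup>+J. (\<integral>\<^sup>+\<omega>. f1 J \<omega> * indicator {\<omega> \<in> space M. g \<omega> = J} \<omega> \<partial>M) \<partial>count_space I)"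
    by (rule key) (rule f1)
  have k2: "(\<integral>\<^sup>+\<omega>. f2 (g \<omega>) \<omega> \<partial>M) = (\<integral>\<^sup>+J. (\<integral>\<^sup>+\<omega>. f2 J \<omega> * indicator {\<omega> \<in> space M. g \<omega> = J} \<omega> \<partial>M) \<partial>count_space I)"
    by (rule key) (rule f2)
  show ?thesis
    unfolding k1 k2 by (rule nn_integral_cong, rule eq) simp
qed

lemma cancel_aux: "(c::real) \<noteq> 0 \<Longrightarrow> z \<noteq> 0 \<Longrightarrow> c * (y / (c * z)) = y / z"
  by (simp add: field_simps)
lemma A: "real (Suc n) * ((x::real)^(Suc n) / fact (Suc n)) = x * (x^n / fact n)"
proof -
  have f: "fact (Suc n) = real (Suc n) * fact n" by (simp add: fact_Suc)
  have "real (Suc n) * (x^(Suc n) / (real (Suc n) * fact n)) = x^(Suc n) / fact n"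
    by (rule cancel_aux) auto
  then show ?thesis unfolding f by simp
qed
lemma B: "(real (Suc n))\<^sup>2 * ((x::real)^(Suc n) / fact (Suc n)) = x * (real n * (x^n / fact n) + x^n / fact n)"
proof -
  have "(real (Suc n))\<^sup>2 * (x^(Suc n) / fact (Suc n)) = real (Suc n) * (real (Suc n) * (x^(Suc n) / fact (Suc n)))"
    by (simp add: power2_eq_square)
  also have "\<dots> = real (Suc n) * (x * (x^n / fact n))" unfolding A ..
  also have "\<dots> = x * (real n * (x^n / fact n) + x^n / fact n)"
    by (simp only: of_nat_Suc distrib_left distrib_right mult_ac mult_1_left mult_1_right)
  finally show ?thesis .
qed

lemma pois_sums:
  fixes x :: real
  shows "(\<lambda>n. exp (-x) * x^n / fact n) sums 1"
    "(\<lambda>n. real n * (exp (-x) * x^n / fact n)) sums x"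
    "(\<lambda>n. (real n)\<^sup>2 * (exp (-x) * x^n / fact n)) sums (x + x\<^sup>2)"
proof -
  have e0: "(\<lambda>n. x^n / fact n) sums exp x"
    using exp_converges[of x] by (simp add: scaleR_conv_of_real divide_inverse mult.commute)
  define f where "f n = real n * (x^n / fact n)" for n
  have fS: "f (Suc n) = x * (x^n / fact n)" for n
    using A[of n x] by (simp add: f_def)
  have e1: "f sums (x * exp x)"
  proof -
    have "(\<lambda>n. f (Suc n)) sums (x * exp x)" unfolding fS by (rule sums_mult[OF e0])
    then show ?thesis by (subst (asm) sums_Suc_iff) (simp add: f_def)
  qed
  define h where "h n = (real n)\<^sup>2 * (x^n / fact n)" for n
  have hS: "h (Suc n) = x * (f n + x^n / fact n)" for n
    using B[of n x] by (simp add: h_def f_def)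
  have e2: "h sums (x * (x * exp x + exp x))"
  proof -
    have "(\<lambda>n. h (Suc n)) sums (x * (x * exp x + exp x))" unfolding hS by (intro sums_mult sums_add e1 e0)
    then show ?thesis by (subst (asm) sums_Suc_iff) (simp add: h_def)
  qed
  have ee: "exp (-x) * exp x = 1" by (simp add: exp_minus field_simps)
  show "(\<lambda>n. exp (-x) * x^n / fact n) sums 1"
    using sums_mult[OF e0, of "exp (-x)"] ee by (simp add: mult.assoc)
  show "(\<lambda>n. real n * (exp (-x) * x^n / fact n)) sums x"
    using sums_mult[OF e1, of "exp (-x)"] ee unfolding f_def by (simp add: field_simps)
  show "(\<lambda>n. (real n)\<^sup>2 * (exp (-x) * x^n / fact n)) sums (x + x\<^sup>2)"
    using sums_mult[OF e2, of "exp (-x)"] ee unfolding h_def by (simp add: field_simps power2_eq_square)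
qed

lemma L_meas:
  fixes Z :: "'a \<Rightarrow> real \<Rightarrow> real" and a b lam :: real
  assumes ab: "a \<le> b" and lam: "lam > 0"
    and Zm: "\<And>s. (\<lambda>\<omega>. Z \<omega> s) \<in> borel_measurable M"
    and Zc: "\<And>\<omega>. \<omega> \<in> space M \<Longrightarrow> continuous_on UNIV (Z \<omega>)"
  shows "(\<lambda>\<omega>. LBINT s=a..b. lam * exp (Z \<omega> s)) \<in> borel_measurable M"
    "\<And>\<omega>. (LBINT s=a..b. lam * exp (Z \<omega> s)) \<ge> 0"
proof -
  have jm: "(\<lambda>p. Z (fst p) (snd p)) \<in> borel_measurable (M \<Otimes>\<^sub>M lborel)"
    by (rule joint_meas[OF Zm Zc])
  define F where "F p = indicator {a<..<b} (snd p) * (lam * exp (Z (fst p) (snd p)))" for p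
  have Fm[measurable]: "F \<in> borel_measurable (M \<Otimes>\<^sub>M lborel)"
  proof -
    have "(\<lambda>p. exp (Z (fst p) (snd p))) \<in> borel_measurable (M \<Otimes>\<^sub>M lborel)"
      using measurable_compose[OF jm borel_measurable_exp] by (simp add: comp_def)
    then show ?thesis unfolding F_def by measurable
  qed
  have Lrep: "(LBINT s=a..b. lam * exp (Z \<omega> s)) = (\<integral>s. F (\<omega>, s) \<partial>lborel)" if "\<omega> \<in> space M" for \<omega>
    unfolding F_def fst_conv snd_conv
    by (rule LBINT_nn(3)[OF ab]) (use Zc[OF that] lam in \<open>auto intro!: continuous_intros\<close>)
  have "(\<lambda>\<omega>. \<integral>s. F (\<omega>, s) \<partial>lborel) \<in> borel_measurable M" by measurable
  then show "(\<lambda>\<omega>. LBINT s=a..b. lam * exp (Z \<omega> s)) \<in> borel_measurable M"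
    by (rule measurable_cong[THEN iffD1, rotated]) (metis Lrep)
  show "(LBINT s=a..b. lam * exp (Z \<omega> s)) \<ge> 0" for \<omega>
    using ab lam by (intro LBINT_nonneg) auto
qed

locale cox_setting =
  fixes M :: "'a measure" and Z :: "'a \<Rightarrow> real \<Rightarrow> real" and T :: "'a \<Rightarrow> int \<Rightarrow> real" and lam :: real
  assumes P: "prob_space M" and lam: "lam > 0"
    and Zm: "\<And>s. (\<lambda>\<omega>. Z \<omega> s) \<in> borel_measurable M"
    and Zc: "\<And>\<omega>. \<omega> \<in> space M \<Longrightarrow> continuous_on UNIV (Z \<omega>)"
    and Tmeas: "\<And>k. (\<lambda>\<omega>. T \<omega> k) \<in> borel_measurable M"
    and cox: "cox_given M (vimage_algebra (space M) Z (Pi\<^sub>M UNIV (\<lambda>_. borel)))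
               (\<lambda>\<omega> a b. LBINT s=a..b. lam * exp (Z \<omega> s)) T"
begin

sublocale prob_space M by (rule P)

abbreviation "FF \<equiv> vimage_algebra (space M) Z (Pi\<^sub>M (UNIV :: real set) (\<lambda>_. (borel :: real measure)))"

lemma Zvec_meas: "Z \<in> measurable M (Pi\<^sub>M (UNIV :: real set) (\<lambda>_. (borel :: real measure)))"
proof -
  have "(\<lambda>\<omega> s. Z \<omega> s) \<in> measurable M (Pi\<^sub>M (UNIV :: real set) (\<lambda>_. (borel :: real measure)))"
    by (rule measurable_PiM_single') (auto simp: Zm)
  then show ?thesis by simp
qed

lemma subalg: "subalgebra M FF"
  using Zvec_meas unfolding subalgebra_def measurable_iff_sets by simp

sublocale SF: sigma_finite_subalgebra M FF
  by (rule finite_measure_subalgebra_is_sigma_finite) (intro finite_measure_subalgebra.intro finite_measure_axioms finite_measure_subalgebra_axioms.intro subalg)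

lemma Tv_meas: "(\<lambda>\<omega> k. T \<omega> k) \<in> measurable M PT"
  by (rule measurable_PiM_single') (auto simp: Tmeas)

lemma g_meas:
  fixes a b :: real
  shows "(\<lambda>\<omega>. gfin {a<..b} (\<lambda>k. T \<omega> k)) \<in> measurable M (count_space {J. finite J})"
  using measurable_comp[OF Tv_meas gfin_meas[of "{a<..b}"]] by (simp add: comp_def)

lemma count_eq: "count_pts T \<omega> A = card (gfin A (\<lambda>k. T \<omega> k))"
  by (simp add: count_pts_def Kset_def card_gfin[symmetric])

lemma count_set_meas:
  fixes a b :: real
  shows "{\<omega> \<in> space M. count_pts T \<omega> {a<..b} = n} \<in> sets M"
proof -
  have "(\<lambda>\<omega>. card (gfin {a<..b} (\<lambda>k. T \<omega> k))) \<in> measurable M (count_space UNIV)"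
    using measurable_comp[OF g_meas[of a b], of card "count_space UNIV"] by (simp add: comp_def)
  then have "{\<omega> \<in> space M. card (gfin {a<..b} (\<lambda>k. T \<omega> k)) = n} \<in> sets M"
    by measurable
  then show ?thesis by (simp add: count_eq)
qed

definition Lam :: "real \<Rightarrow> real \<Rightarrow> 'a \<Rightarrow> real" where
  "Lam a b \<omega> = (LBINT s=a..b. lam * exp (Z \<omega> s))"

lemma Lam_meas: "a \<le> b \<Longrightarrow> Lam a b \<in> borel_measurable M"
  unfolding Lam_def by (rule L_meas(1)[OF _ lam Zm Zc])

lemma Lam_pos: "a \<le> b \<Longrightarrow> Lam a b \<omega> \<ge> 0"
  unfolding Lam_def by (rule L_meas(2)[OF _ lam Zm Zc])

definition pn :: "nat \<Rightarrow> real \<Rightarrow> real" where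
  "pn n x = exp (- x) * x ^ n / fact n"

lemma pois_prob:
  assumes ab: "a \<le> b"
  shows "integrable M (\<lambda>\<omega>. pn n (Lam a b \<omega>))"
    "prob {\<omega> \<in> space M. count_pts T \<omega> {a<..b} = n} = (\<integral>\<omega>. pn n (Lam a b \<omega>) \<partial>M)"
proof -
  define C where "C = {\<omega> \<in> space M. count_pts T \<omega> {a<..b} = n}"
  have Cm: "C \<in> sets M" unfolding C_def by (rule count_set_meas)
  have ae: "AE \<omega> in M. real_cond_exp M FF (indicator C) \<omega> = pn n (Lam a b \<omega>)"
  proof -
    have "AE \<omega> in M. real_cond_exp M FF
            (indicator {\<omega>'\<in>space M. \<forall>i<(1::nat). count_pts T \<omega>' {(\<lambda>_. a) i<..(\<lambda>_. b) i} = (\<lambda>_. n) i}) \<omega>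
          = (\<Prod>i<(1::nat). exp (- (LBINT s=(\<lambda>_. a) i..(\<lambda>_. b) i. lam * exp (Z \<omega> s))) *
               (LBINT s=(\<lambda>_. a) i..(\<lambda>_. b) i. lam * exp (Z \<omega> s)) ^ (\<lambda>_. n) i / fact ((\<lambda>_. n) i))"
      using cox[unfolded cox_given_def, THEN spec, THEN spec, THEN spec, THEN spec, of 1 "\<lambda>_. a" "\<lambda>_. b" "\<lambda>_. n"] ab
      by simp
    moreover have "{\<omega>'\<in>space M. \<forall>i<(1::nat). count_pts T \<omega>' {(\<lambda>_. a) i<..(\<lambda>_. b) i} = (\<lambda>_. n) i} = C"
      by (auto simp: C_def)
    ultimately show ?thesis by (simp add: pn_def Lam_def)
  qed
  have IC: "integrable M (indicator C :: 'a \<Rightarrow> real)"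
    using Cm by (intro integrable_real_indicator) (simp_all add: less_top[symmetric])
  have Im: "integrable M (real_cond_exp M FF (indicator C))"
    by (rule SF.real_cond_exp_int(1)[OF IC])
  have pm: "(\<lambda>\<omega>. pn n (Lam a b \<omega>)) \<in> borel_measurable M"
    using Lam_meas[OF ab] unfolding pn_def by measurable
  show I: "integrable M (\<lambda>\<omega>. pn n (Lam a b \<omega>))"
    by (rule integrable_cong_AE[THEN iffD1, OF _ pm ae Im]) (rule borel_measurable_integrable[OF Im])
  have "prob C = (\<integral>\<omega>. indicator C \<omega> \<partial>M)" using Cm by simp
  also have "\<dots> = (\<integral>\<omega>. real_cond_exp M FF (indicator C) \<omega> \<partial>M)"
    by (rule SF.real_cond_exp_int(2)[OF IC, symmetric])
  also have "\<dots> = (\<integral>\<omega>. pn n (Lam a b \<omega>) \<partial>M)"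
    by (rule integral_cong_AE[OF borel_measurable_integrable[OF Im] pm ae])
  finally show "prob {\<omega> \<in> space M. count_pts T \<omega> {a<..b} = n} = (\<integral>\<omega>. pn n (Lam a b \<omega>) \<partial>M)"
    unfolding C_def .
qed

lemma count_moment:
  fixes w :: "nat \<Rightarrow> real" and W :: "real \<Rightarrow> real"
  assumes ab: "a \<le> b" and wpos: "\<And>n. w n \<ge> 0"
    and ws: "\<And>x. x \<ge> 0 \<Longrightarrow> (\<lambda>n. w n * pn n x) sums W x"
  shows "(\<integral>\<^sup>+\<omega>. ennreal (w (count_pts T \<omega> {a<..b})) \<partial>M) = (\<integral>\<^sup>+\<omega>. ennreal (W (Lam a b \<omega>)) \<partial>M)"
proof -
  define C where "C n = {\<omega> \<in> space M. count_pts T \<omega> {a<..b} = n}" for n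
  have Cm: "C n \<in> sets M" for n unfolding C_def by (rule count_set_meas)
  have pnpos: "pn n x \<ge> 0" if "x \<ge> 0" for n x using that by (simp add: pn_def)
  have "(\<integral>\<^sup>+\<omega>. ennreal (w (count_pts T \<omega> {a<..b})) \<partial>M) = (\<integral>\<^sup>+\<omega>. (\<Sum>n. ennreal (w n) * indicator (C n) \<omega>) \<partial>M)"
  proof (intro nn_integral_cong)
    fix \<omega> assume om: "\<omega> \<in> space M"
    have eq: "(\<lambda>n. ennreal (w n) * indicator (C n) \<omega>) = (\<lambda>n. if n = count_pts T \<omega> {a<..b} then ennreal (w n) else 0)"
      using om by (auto simp: C_def indicator_def)
    have "(\<lambda>n. if n = count_pts T \<omega> {a<..b} then ennreal (w n) else 0) sums ennreal (w (count_pts T \<omega> {a<..b}))"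
      by (rule sums_single)
    then have "ennreal (w (count_pts T \<omega> {a<..b})) = (\<Sum>n. if n = count_pts T \<omega> {a<..b} then ennreal (w n) else 0)"
      by (rule sums_unique)
    then show "ennreal (w (count_pts T \<omega> {a<..b})) = (\<Sum>n. ennreal (w n) * indicator (C n) \<omega>)"
      unfolding eq .
  qed
  also have "\<dots> = (\<Sum>n. \<integral>\<^sup>+\<omega>. ennreal (w n) * indicator (C n) \<omega> \<partial>M)"
    by (rule nn_integral_suminf) (intro borel_measurable_times_ennreal borel_measurable_const borel_measurable_indicator Cm)
  also have "\<dots> = (\<Sum>n. \<integral>\<^sup>+\<omega>. ennreal (w n * pn n (Lam a b \<omega>)) \<partial>M)"
  proof (intro suminf_cong)
    fix n
    have "(\<integral>\<^sup>+\<omega>. ennreal (w n) * indicator (C n) \<omega> \<partial>M) = ennreal (w n) * emeasure M (C n)"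
      using Cm by (simp add: nn_integral_cmult_indicator)
    also have "\<dots> = ennreal (w n * (\<integral>\<omega>. pn n (Lam a b \<omega>) \<partial>M))"
    proof -
      have "0 \<le> (\<integral>\<omega>. pn n (Lam a b \<omega>) \<partial>M)"
        by (intro integral_nonneg_AE) (simp add: pnpos Lam_pos[OF ab])
      then show ?thesis
        using pois_prob(2)[OF ab, of n] wpos[of n] by (simp add: emeasure_eq_measure C_def ennreal_mult)
    qed
    also have "\<dots> = ennreal (\<integral>\<omega>. w n * pn n (Lam a b \<omega>) \<partial>M)" by simp
    also have "\<dots> = (\<integral>\<^sup>+\<omega>. ennreal (w n * pn n (Lam a b \<omega>)) \<partial>M)"
      by (rule nn_integral_eq_integral[symmetric])
         (use pois_prob(1)[OF ab, of n] wpos[of n] pnpos Lam_pos[OF ab] in auto)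
    finally show "(\<integral>\<^sup>+\<omega>. ennreal (w n) * indicator (C n) \<omega> \<partial>M) = (\<integral>\<^sup>+\<omega>. ennreal (w n * pn n (Lam a b \<omega>)) \<partial>M)" .
  qed
  also have "\<dots> = (\<integral>\<^sup>+\<omega>. (\<Sum>n. ennreal (w n * pn n (Lam a b \<omega>))) \<partial>M)"
  proof -
    have "(\<lambda>\<omega>. pn n (Lam a b \<omega>)) \<in> borel_measurable M" for n
      using Lam_meas[OF ab] unfolding pn_def by measurable
    then show ?thesis by (intro nn_integral_suminf[symmetric]) measurable
  qed
  also have "\<dots> = (\<integral>\<^sup>+\<omega>. ennreal (W (Lam a b \<omega>)) \<partial>M)"
  proof (intro nn_integral_cong)
    fix \<omega>
    have s: "(\<lambda>n. w n * pn n (Lam a b \<omega>)) sums W (Lam a b \<omega>)" by (rule ws[OF Lam_pos[OF ab]])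
    show "(\<Sum>n. ennreal (w n * pn n (Lam a b \<omega>))) = ennreal (W (Lam a b \<omega>))"
    proof -
      have "(\<Sum>n. ennreal (w n * pn n (Lam a b \<omega>))) = ennreal (\<Sum>n. w n * pn n (Lam a b \<omega>))"
        by (rule suminf_ennreal2) (use s wpos pnpos[OF Lam_pos[OF ab]] in \<open>auto intro: sums_summable\<close>)
      also have "(\<Sum>n. w n * pn n (Lam a b \<omega>)) = W (Lam a b \<omega>)"
        using s by (rule sums_unique[symmetric])
      finally show ?thesis .
    qed
  qed
  finally show ?thesis .
qed

end

locale e_setting = prob_space M for M :: "'a measure" +
  fixes e :: "int \<Rightarrow> 'a \<Rightarrow> real" and sig :: real
  assumes e_indep: "indep_vars (\<lambda>_. borel) e UNIV"
    and e_ident: "\<And>k. distr M borel (e k) = distr M borel (e 0)"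
    and e_moments: "\<And>n::nat. integrable M (\<lambda>\<omega>. e 0 \<omega> ^ n)"
    and e_mean: "expectation (e 0) = 0"
    and e_var: "variance (e 0) = sig\<^sup>2"
begin

lemma e_meas[measurable]: "e k \<in> borel_measurable M"
  using e_indep unfolding indep_vars_def by auto

lemma e_trans:
  fixes f :: "real \<Rightarrow> real"
  assumes f[measurable]: "f \<in> borel_measurable borel"
  shows "integrable M (\<lambda>\<omega>. f (e k \<omega>)) \<longleftrightarrow> integrable M (\<lambda>\<omega>. f (e 0 \<omega>))"
    "(\<integral>\<omega>. f (e k \<omega>) \<partial>M) = (\<integral>\<omega>. f (e 0 \<omega>) \<partial>M)"
proof -
  show "integrable M (\<lambda>\<omega>. f (e k \<omega>)) \<longleftrightarrow> integrable M (\<lambda>\<omega>. f (e 0 \<omega>))"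
    using integrable_distr_eq[of "e k" M borel f] integrable_distr_eq[of "e 0" M borel f] e_ident[of k] by simp
  show "(\<integral>\<omega>. f (e k \<omega>) \<partial>M) = (\<integral>\<omega>. f (e 0 \<omega>) \<partial>M)"
    using integral_distr[of "e k" M borel f] integral_distr[of "e 0" M borel f] e_ident[of k] by simp
qed

lemma e_int: "integrable M (e k)" "integrable M (\<lambda>\<omega>. (e k \<omega>)\<^sup>2)"
  "expectation (e k) = 0" "expectation (\<lambda>\<omega>. (e k \<omega>)\<^sup>2) = sig\<^sup>2"
proof -
  have i1: "integrable M (e 0)" using e_moments[of 1] by simp
  have i2: "integrable M (\<lambda>\<omega>. (e 0 \<omega>)\<^sup>2)" using e_moments[of 2] by simp
  show "integrable M (e k)" using e_trans(1)[of "\<lambda>x. x" k] i1 by simp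
  show "integrable M (\<lambda>\<omega>. (e k \<omega>)\<^sup>2)" using e_trans(1)[of "\<lambda>x. x\<^sup>2" k] i2 by simp
  show "expectation (e k) = 0" using e_trans(2)[of "\<lambda>x. x" k] e_mean by simp
  have "expectation (\<lambda>\<omega>. (e 0 \<omega>)\<^sup>2) = sig\<^sup>2"
    using e_var e_mean variance_eq[OF i1 i2] by simp
  then show "expectation (\<lambda>\<omega>. (e k \<omega>)\<^sup>2) = sig\<^sup>2" using e_trans(2)[of "\<lambda>x. x\<^sup>2" k] by simp
qed

lemma e_cross:
  assumes "j \<noteq> k"
  shows "integrable M (\<lambda>\<omega>. e j \<omega> * e k \<omega>)" "expectation (\<lambda>\<omega>. e j \<omega> * e k \<omega>) = 0"
proof -
  have ind: "indep_vars (\<lambda>_. borel) e {j, k}" by (rule indep_vars_subset[OF e_indep]) auto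
  have ii: "\<And>i. i \<in> {j, k} \<Longrightarrow> integrable M (e i)" using e_int(1) by auto
  have "(\<lambda>\<omega>. \<Prod>i\<in>{j,k}. e i \<omega>) = (\<lambda>\<omega>. e j \<omega> * e k \<omega>)" using assms by auto
  then show "integrable M (\<lambda>\<omega>. e j \<omega> * e k \<omega>)" "expectation (\<lambda>\<omega>. e j \<omega> * e k \<omega>) = 0"
    using indep_vars_integrable[OF _ ind ii] indep_vars_lebesgue_integral[OF _ ind ii] assms
    by (simp_all add: e_int(3))
qed

lemma esum_sq:
  assumes J: "finite J"
  shows "integrable M (\<lambda>\<omega>. (\<Sum>k\<in>J. e k \<omega>)\<^sup>2)" "expectation (\<lambda>\<omega>. (\<Sum>k\<in>J. e k \<omega>)\<^sup>2) = real (card J) * sig\<^sup>2"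
proof -
  have sq: "(\<Sum>k\<in>J. e k \<omega>)\<^sup>2 = (\<Sum>j\<in>J. \<Sum>k\<in>J. e j \<omega> * e k \<omega>)" for \<omega>
    by (simp add: power2_eq_square sum_product)
  have ijk: "integrable M (\<lambda>\<omega>. e j \<omega> * e k \<omega>)" for j k
    by (cases "j = k") (use e_int(2)[of j] e_cross[of j k] in \<open>auto simp: power2_eq_square\<close>)
  have ejk: "expectation (\<lambda>\<omega>. e j \<omega> * e k \<omega>) = (if j = k then sig\<^sup>2 else 0)" for j k
    by (cases "j = k") (use e_int(4)[of j] e_cross[of j k] in \<open>auto simp: power2_eq_square\<close>)
  show "integrable M (\<lambda>\<omega>. (\<Sum>k\<in>J. e k \<omega>)\<^sup>2)" unfolding sq by (rule Bochner_Integration.integrable_sum, rule Bochner_Integration.integrable_sum, rule ijk)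
  have "expectation (\<lambda>\<omega>. (\<Sum>k\<in>J. e k \<omega>)\<^sup>2) = (\<Sum>j\<in>J. \<Sum>k\<in>J. expectation (\<lambda>\<omega>. e j \<omega> * e k \<omega>))"
    unfolding sq by (simp add: Bochner_Integration.integral_sum ijk integrable_sum)
  also have "\<dots> = (\<Sum>j\<in>J. sig\<^sup>2)" unfolding ejk using J by (simp add: sum.delta)
  finally show "expectation (\<lambda>\<omega>. (\<Sum>k\<in>J. e k \<omega>)\<^sup>2) = real (card J) * sig\<^sup>2" by simp
qed

lemma esum_shift:
  assumes J: "finite J"
  shows "integrable M (\<lambda>\<omega>. (d + (\<Sum>k\<in>J. e k \<omega>))\<^sup>2)"
    "expectation (\<lambda>\<omega>. (d + (\<Sum>k\<in>J. e k \<omega>))\<^sup>2) = d\<^sup>2 + real (card J) * sig\<^sup>2"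
proof -
  have ex: "(d + (\<Sum>k\<in>J. e k \<omega>))\<^sup>2 = d\<^sup>2 + 2 * d * (\<Sum>k\<in>J. e k \<omega>) + (\<Sum>k\<in>J. e k \<omega>)\<^sup>2" for \<omega>
    by (simp add: power2_eq_square algebra_simps)
  have is1: "integrable M (\<lambda>\<omega>. \<Sum>k\<in>J. e k \<omega>)" by (intro Bochner_Integration.integrable_sum e_int(1))
  have es1: "expectation (\<lambda>\<omega>. \<Sum>k\<in>J. e k \<omega>) = 0"
    by (simp add: Bochner_Integration.integral_sum e_int(1) e_int(3))
  show "integrable M (\<lambda>\<omega>. (d + (\<Sum>k\<in>J. e k \<omega>))\<^sup>2)"
    unfolding ex using is1 esum_sq(1)[OF J] by simp
  show "expectation (\<lambda>\<omega>. (d + (\<Sum>k\<in>J. e k \<omega>))\<^sup>2) = d\<^sup>2 + real (card J) * sig\<^sup>2"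
    unfolding ex using is1 esum_sq[OF J] es1 by (simp add: prob_space)
qed

end

locale main_setting = cox_setting M Z T lam + e_setting M e sig
  for M :: "'a measure" and Z T lam e sig +
  assumes e_N_indep: "indep_var PT (\<lambda>\<omega> k. e k \<omega>) PT (\<lambda>\<omega> k. T \<omega> k)"
begin

lemma ev_meas: "(\<lambda>\<omega> k. e k \<omega>) \<in> measurable M PT"
  by (rule measurable_PiM_single') auto

lemma indep_J:
  fixes a b :: real and \<psi> :: "(int \<Rightarrow> real) \<Rightarrow> real"
  assumes J: "finite J" and \<psi>m: "\<psi> \<in> borel_measurable PT"
    and \<psi>i: "integrable M (\<lambda>\<omega>. \<psi> (\<lambda>k. e k \<omega>))"
  defines "G \<equiv> {\<omega> \<in> space M. gfin {a<..b} (\<lambda>k. T \<omega> k) = J}"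
  shows "integrable M (\<lambda>\<omega>. \<psi> (\<lambda>k. e k \<omega>) * indicator G \<omega>)"
    "(\<integral>\<omega>. \<psi> (\<lambda>k. e k \<omega>) * indicator G \<omega> \<partial>M) = prob G * (\<integral>\<omega>. \<psi> (\<lambda>k. e k \<omega>) \<partial>M)"
proof -
  define GG where "GG = {\<tau> \<in> space PT. gfin {a<..b} \<tau> = J}"
  have GGm: "GG \<in> sets PT"
  proof -
    have "gfin {a<..b} -` {J} \<inter> space PT \<in> sets PT"
      using measurable_sets[OF gfin_meas[of "{a<..b}"], of "{J}"] J by simp
    then show ?thesis unfolding GG_def by (simp add: vimage_def Int_def conj_commute)
  qed
  have ind: "indep_var borel (\<psi> \<circ> (\<lambda>\<omega> k. e k \<omega>)) borel (indicator GG \<circ> (\<lambda>\<omega> k. T \<omega> k))"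
    by (rule indep_var_compose[OF e_N_indep \<psi>m]) (rule borel_measurable_indicator[OF GGm])
  have eqG: "(indicator GG \<circ> (\<lambda>\<omega> k. T \<omega> k)) \<omega> = (indicator G \<omega> :: real)" if "\<omega> \<in> space M" for \<omega>
    using measurable_space[OF Tv_meas that] that by (auto simp: GG_def G_def indicator_def)
  have eqG': "(indicator GG (T \<omega>) :: real) = indicator G \<omega>" if "\<omega> \<in> space M" for \<omega>
    using eqG[OF that] by simp
  have Gm: "G \<in> sets M"
    using measurable_sets[OF Tv_meas GGm] unfolding G_def GG_def by (simp add: vimage_def Int_def conj_commute space_PiM PiE_def extensional_def)
  have II: "integrable M (indicator GG \<circ> (\<lambda>\<omega> k. T \<omega> k) :: 'a \<Rightarrow> real)"
  proof -
    have "integrable M (indicator G :: 'a \<Rightarrow> real)" using Gm by (simp add: less_top[symmetric])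
    moreover have "integrable M (indicator G :: 'a \<Rightarrow> real) \<longleftrightarrow> integrable M (indicator GG \<circ> (\<lambda>\<omega> k. T \<omega> k) :: 'a \<Rightarrow> real)"
      by (rule Bochner_Integration.integrable_cong) (auto simp: eqG')
    ultimately show ?thesis by simp
  qed
  have \<psi>i': "integrable M (\<psi> \<circ> (\<lambda>\<omega> k. e k \<omega>))" using \<psi>i by (simp add: comp_def)
  have "integrable M (\<lambda>\<omega>. (\<psi> \<circ> (\<lambda>\<omega> k. e k \<omega>)) \<omega> * (indicator GG \<circ> (\<lambda>\<omega> k. T \<omega> k)) \<omega>)"
    by (rule indep_var_integrable[OF ind \<psi>i' II])
  then show "integrable M (\<lambda>\<omega>. \<psi> (\<lambda>k. e k \<omega>) * indicator G \<omega>)"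
    by (subst (asm) Bochner_Integration.integrable_cong[OF refl, where g="\<lambda>\<omega>. \<psi> (\<lambda>k. e k \<omega>) * indicator G \<omega>"]) (auto simp: eqG')
  have "(\<integral>\<omega>. (\<psi> \<circ> (\<lambda>\<omega> k. e k \<omega>)) \<omega> * (indicator GG \<circ> (\<lambda>\<omega> k. T \<omega> k)) \<omega> \<partial>M)
      = (\<integral>\<omega>. (\<psi> \<circ> (\<lambda>\<omega> k. e k \<omega>)) \<omega> \<partial>M) * (\<integral>\<omega>. (indicator GG \<circ> (\<lambda>\<omega> k. T \<omega> k)) \<omega> \<partial>M)"
    by (rule indep_var_lebesgue_integral[OF ind \<psi>i' II])
  moreover have "(\<integral>\<omega>. (\<psi> \<circ> (\<lambda>\<omega> k. e k \<omega>)) \<omega> * (indicator GG \<circ> (\<lambda>\<omega> k. T \<omega> k)) \<omega> \<partial>M)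
      = (\<integral>\<omega>. \<psi> (\<lambda>k. e k \<omega>) * indicator G \<omega> \<partial>M)"
    by (intro Bochner_Integration.integral_cong) (auto simp: eqG')
  moreover have "(\<integral>\<omega>. (indicator GG \<circ> (\<lambda>\<omega> k. T \<omega> k)) \<omega> \<partial>M) = (\<integral>\<omega>. (indicator G \<omega> :: real) \<partial>M)"
    by (intro Bochner_Integration.integral_cong) (auto simp: eqG')
  ultimately show "(\<integral>\<omega>. \<psi> (\<lambda>k. e k \<omega>) * indicator G \<omega> \<partial>M) = prob G * (\<integral>\<omega>. \<psi> (\<lambda>k. e k \<omega>) \<partial>M)"
    using Gm by (simp add: comp_def mult.commute)
qed

lemma r_decomp:
  fixes a b mu c :: real
  shows "(\<integral>\<^sup>+\<omega>. ennreal ((mu * real (count_pts T \<omega> {a<..b}) + (\<Sum>k\<in>{k. T \<omega> k \<in> {a<..b}}. e k \<omega>) - c)\<^sup>2) \<partial>M)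
       = (\<integral>\<^sup>+\<omega>. ennreal ((mu * real (count_pts T \<omega> {a<..b}) - c)\<^sup>2 + real (count_pts T \<omega> {a<..b}) * sig\<^sup>2) \<partial>M)"
proof -
  define g where "g \<omega> = gfin {a<..b} (\<lambda>k. T \<omega> k)" for \<omega>
  define f1 where "f1 J \<omega> = ennreal ((mu * real (card J) + (\<Sum>k\<in>J. e k \<omega>) - c)\<^sup>2)" for J :: "int set" and \<omega>
  define f2 where "f2 J \<omega> = ennreal ((mu * real (card J) - c)\<^sup>2 + real (card J) * sig\<^sup>2)" for J :: "int set" and \<omega> :: 'a
  have e1: "ennreal ((mu * real (count_pts T \<omega> {a<..b}) + (\<Sum>k\<in>{k. T \<omega> k \<in> {a<..b}}. e k \<omega>) - c)\<^sup>2) = f1 (g \<omega>) \<omega>" for \<omega>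
    unfolding f1_def g_def count_eq using sum_gfin[where A="{a<..b}" and \<tau>="\<lambda>k. T \<omega> k" and f="\<lambda>k. e k \<omega>"]
    by (simp add: Kset_def)
  have e2: "ennreal ((mu * real (count_pts T \<omega> {a<..b}) - c)\<^sup>2 + real (count_pts T \<omega> {a<..b}) * sig\<^sup>2) = f2 (g \<omega>) \<omega>" for \<omega>
    unfolding f2_def g_def count_eq ..
  have "(\<integral>\<^sup>+\<omega>. f1 (g \<omega>) \<omega> \<partial>M) = (\<integral>\<^sup>+\<omega>. f2 (g \<omega>) \<omega> \<partial>M)"
  proof (rule nn_decomp[OF P countable_Collect_finite])
    show "g \<in> measurable M (count_space {J. finite J})" unfolding g_def by (rule g_meas)
    show "f1 J \<in> borel_measurable M" for J unfolding f1_def by measurable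
    show "f2 J \<in> borel_measurable M" for J unfolding f2_def by measurable
    fix J :: "int set" assume "J \<in> {J. finite J}"
    then have J: "finite J" by simp
    define G where "G = {\<omega> \<in> space M. gfin {a<..b} (\<lambda>k. T \<omega> k) = J}"
    define d where "d = mu * real (card J) - c"
    define \<psi> where "\<psi> x = (d + (\<Sum>k\<in>J. x k))\<^sup>2" for x :: "int \<Rightarrow> real"
    have \<psi>m: "\<psi> \<in> borel_measurable PT" unfolding \<psi>_def by measurable
    have \<psi>i: "integrable M (\<lambda>\<omega>. \<psi> (\<lambda>k. e k \<omega>))" unfolding \<psi>_def by (rule esum_shift(1)[OF J])
    have Gm: "G \<in> sets M"
    proof -
      have "g -` {J} \<inter> space M \<in> sets M" using measurable_sets[OF g_meas[of a b], of "{J}"] J by (simp add: g_def[abs_def])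
      then show ?thesis unfolding G_def g_def by (simp add: vimage_def Int_def conj_commute)
    qed
    have "(\<integral>\<^sup>+\<omega>. f1 J \<omega> * indicator {\<omega> \<in> space M. g \<omega> = J} \<omega> \<partial>M)
        = (\<integral>\<^sup>+\<omega>. ennreal (\<psi> (\<lambda>k. e k \<omega>) * indicator G \<omega>) \<partial>M)"
      by (intro nn_integral_cong) (auto simp: f1_def \<psi>_def d_def G_def g_def indicator_def algebra_simps)
    also have "\<dots> = ennreal (\<integral>\<omega>. \<psi> (\<lambda>k. e k \<omega>) * indicator G \<omega> \<partial>M)"
      by (rule nn_integral_eq_integral) (use indep_J(1)[OF J \<psi>m \<psi>i, of a b] in \<open>auto simp: G_def \<psi>_def\<close>)
    also have "\<dots> = ennreal (prob G * (d\<^sup>2 + real (card J) * sig\<^sup>2))"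
      using indep_J(2)[OF J \<psi>m \<psi>i, of a b] esum_shift(2)[OF J, of d] by (simp add: G_def \<psi>_def)
    also have "\<dots> = ennreal (d\<^sup>2 + real (card J) * sig\<^sup>2) * emeasure M G"
    proof -
      have "ennreal (prob G * (d\<^sup>2 + real (card J) * sig\<^sup>2)) = ennreal (d\<^sup>2 + real (card J) * sig\<^sup>2) * ennreal (prob G)"
        by (subst ennreal_mult[symmetric]) (auto simp: mult.commute)
      then show ?thesis by (simp only: emeasure_eq_measure)
    qed
    also have "\<dots> = (\<integral>\<^sup>+\<omega>. ennreal (d\<^sup>2 + real (card J) * sig\<^sup>2) * indicator G \<omega> \<partial>M)"
      by (rule nn_integral_cmult_indicator[symmetric, OF Gm])
    also have "\<dots> = (\<integral>\<^sup>+\<omega>. f2 J \<omega> * indicator {\<omega> \<in> space M. g \<omega> = J} \<omega> \<partial>M)"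
      by (intro nn_integral_cong) (auto simp: f2_def d_def G_def g_def indicator_def)
    finally show "(\<integral>\<^sup>+\<omega>. f1 J \<omega> * indicator {\<omega> \<in> space M. g \<omega> = J} \<omega> \<partial>M)
        = (\<integral>\<^sup>+\<omega>. f2 J \<omega> * indicator {\<omega> \<in> space M. g \<omega> = J} \<omega> \<partial>M)" .
  qed
  then show ?thesis unfolding e1 e2 .
qed

end

context main_setting
begin

lemma N_meas: "(\<lambda>\<omega>. real (count_pts T \<omega> {a<..b})) \<in> borel_measurable M"
proof -
  have "(\<lambda>\<omega>. real (card (gfin {a<..b} (\<lambda>k. T \<omega> k)))) \<in> borel_measurable M"
    using measurable_comp[OF g_meas[of a b], of "\<lambda>J. real (card J)" borel] by (simp add: comp_def)
  then show ?thesis by (simp add: count_eq)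
qed

lemma S_meas: "(\<lambda>\<omega>. \<Sum>k\<in>{k. T \<omega> k \<in> {a<..b}}. e k \<omega>) \<in> borel_measurable M"
proof -
  have "(\<lambda>\<omega>. (\<lambda>J \<omega>. \<Sum>k\<in>J. e k \<omega>) (gfin {a<..b} (\<lambda>k. T \<omega> k)) \<omega>) \<in> borel_measurable M"
    by (rule measurable_compose_countable'[OF _ g_meas countable_Collect_finite]) measurable
  moreover have "(\<Sum>k\<in>{k. T \<omega> k \<in> {a<..b}}. e k \<omega>) = (\<lambda>J \<omega>. \<Sum>k\<in>J. e k \<omega>) (gfin {a<..b} (\<lambda>k. T \<omega> k)) \<omega>" for \<omega>
    using sum_gfin[where A="{a<..b}" and \<tau>="\<lambda>k. T \<omega> k" and f="\<lambda>k. e k \<omega>"] by (simp add: Kset_def)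
  ultimately show ?thesis by simp
qed

lemma variance_main:
  fixes t :: int and k :: "real \<Rightarrow> real" and mu :: real and r :: "'a \<Rightarrow> real"
  assumes E1: "\<And>s. (\<integral>\<^sup>+\<omega>. ennreal (exp (Z \<omega> s)) \<partial>M) = ennreal (exp (1/2))"
    and E2: "\<And>s u. (\<integral>\<^sup>+\<omega>. ennreal (exp (Z \<omega> s + Z \<omega> u)) \<partial>M) = ennreal (exp 1 * k (s - u))"
    and kc: "continuous_on UNIV k" and kpos: "\<And>x. k x \<ge> 0"
    and rdef: "\<And>\<omega>. r \<omega> = mu * real (count_pts T \<omega> {real_of_int t - 1<..real_of_int t})
                   + (\<Sum>k\<in>{k. T \<omega> k \<in> {real_of_int t - 1<..real_of_int t}}. e k \<omega>)"
  shows "variance r = mu\<^sup>2 * lam\<^sup>2 * exp 1 * (LBINT s=-1..0. (LBINT u=-1..0. k (s - u) - 1))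
           + lam * exp (1/2) * (mu\<^sup>2 + sig\<^sup>2)"
proof -
  define a where "a = real_of_int t - 1"
  define b where "b = real_of_int t"
  have ab: "a \<le> b" and ba: "b = a + 1" by (simp_all add: a_def b_def)
  define N where "N \<omega> = real (count_pts T \<omega> {a<..b})" for \<omega>
  define S where "S \<omega> = (\<Sum>k\<in>{k. T \<omega> k \<in> {a<..b}}. e k \<omega>)" for \<omega>
  have rNS: "r \<omega> = mu * N \<omega> + S \<omega>" for \<omega> by (simp add: rdef N_def S_def a_def b_def)
  have Nm[measurable]: "N \<in> borel_measurable M" unfolding N_def by (rule N_meas)
  have Sm[measurable]: "S \<in> borel_measurable M" unfolding S_def by (rule S_meas)
  have rm[measurable]: "r \<in> borel_measurable M" unfolding rNS[abs_def] by measurable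
  have Npos: "N \<omega> \<ge> 0" for \<omega> by (simp add: N_def)
  define Q where "Q = (LBINT s=a..b. (LBINT u=a..b. k (s - u)))"
  define m1 where "m1 = lam * exp (1/2)"
  define m2 where "m2 = lam\<^sup>2 * exp 1 * Q"
  have IL: "integrable M (Lam a b)" and EL: "(\<integral>\<omega>. Lam a b \<omega> \<partial>M) = m1"
    using L_first(2,3)[OF P ab lam Zm Zc E1] by (simp_all add: Lam_def[abs_def] m1_def ba)
  have IL2: "integrable M (\<lambda>\<omega>. (Lam a b \<omega>)\<^sup>2)" and EL2: "(\<integral>\<omega>. (Lam a b \<omega>)\<^sup>2 \<partial>M) = m2"
    using L_second[OF P ab lam Zm Zc E2 kc kpos] by (simp_all add: Lam_def[abs_def] m2_def Q_def)
  have nnN: "(\<integral>\<^sup>+\<omega>. ennreal (N \<omega>) \<partial>M) = ennreal m1"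
  proof -
    have "(\<integral>\<^sup>+\<omega>. ennreal (N \<omega>) \<partial>M) = (\<integral>\<^sup>+\<omega>. ennreal (Lam a b \<omega>) \<partial>M)"
      unfolding N_def by (rule count_moment[OF ab, of real "\<lambda>x. x"]) (use pois_sums(2) in \<open>simp_all add: pn_def\<close>)
    also have "\<dots> = ennreal m1"
      using nn_integral_eq_integral[OF IL] Lam_pos[OF ab] EL by simp
    finally show ?thesis .
  qed
  have nnN2: "(\<integral>\<^sup>+\<omega>. ennreal ((N \<omega>)\<^sup>2) \<partial>M) = ennreal (m1 + m2)"
  proof -
    have "(\<integral>\<^sup>+\<omega>. ennreal ((N \<omega>)\<^sup>2) \<partial>M) = (\<integral>\<^sup>+\<omega>. ennreal (Lam a b \<omega> + (Lam a b \<omega>)\<^sup>2) \<partial>M)"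
      unfolding N_def by (rule count_moment[OF ab, of "\<lambda>n. (real n)\<^sup>2" "\<lambda>x. x + x\<^sup>2"]) (use pois_sums(3) in \<open>simp_all add: pn_def\<close>)
    also have "\<dots> = ennreal (\<integral>\<omega>. Lam a b \<omega> + (Lam a b \<omega>)\<^sup>2 \<partial>M)"
      by (rule nn_integral_eq_integral[OF Bochner_Integration.integrable_add[OF IL IL2]]) (simp add: Lam_pos[OF ab])
    also have "\<dots> = ennreal (m1 + m2)"
      using Bochner_Integration.integral_add[OF IL IL2] EL EL2 by simp
    finally show ?thesis .
  qed
  have IN: "integrable M N" by (rule integrableI_nn_integral_finite[OF Nm _ nnN]) (simp add: Npos)
  have IN2: "integrable M (\<lambda>\<omega>. (N \<omega>)\<^sup>2)" by (rule integrableI_nn_integral_finite[OF _ _ nnN2]) simp_all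
  have m1pos: "m1 \<ge> 0" by (simp add: m1_def less_imp_le[OF lam])
  have m2pos: "m1 + m2 \<ge> 0"
  proof -
    have "Q \<ge> 0" unfolding Q_def using ab by (intro LBINT_nonneg) (auto simp: kpos)
    then show ?thesis using m1pos by (simp add: m2_def)
  qed
  have EN: "expectation N = m1"
    using nn_integral_eq_integral[OF IN] nnN Npos m1pos by (simp add: integral_nonneg_AE)
  have EN2: "expectation (\<lambda>\<omega>. (N \<omega>)\<^sup>2) = m1 + m2"
    using nn_integral_eq_integral[OF IN2] nnN2 m2pos by (simp add: integral_nonneg_AE)
  define V where "V c = mu\<^sup>2 * (m1 + m2) - 2 * c * mu * m1 + c\<^sup>2 + sig\<^sup>2 * m1" for c
  have Rc: "integrable M (\<lambda>\<omega>. (r \<omega> - c)\<^sup>2) \<and> expectation (\<lambda>\<omega>. (r \<omega> - c)\<^sup>2) = V c" for c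
  proof -
    have ex: "(mu * N \<omega> - c)\<^sup>2 + N \<omega> * sig\<^sup>2 = mu\<^sup>2 * (N \<omega>)\<^sup>2 - 2 * c * mu * N \<omega> + c\<^sup>2 + sig\<^sup>2 * N \<omega>" for \<omega>
      by (simp add: power2_eq_square algebra_simps)
    have IR: "integrable M (\<lambda>\<omega>. (mu * N \<omega> - c)\<^sup>2 + N \<omega> * sig\<^sup>2)"
      unfolding ex using IN IN2 by simp
    have ER: "expectation (\<lambda>\<omega>. (mu * N \<omega> - c)\<^sup>2 + N \<omega> * sig\<^sup>2) = V c"
      unfolding ex using IN IN2 EN EN2 by (simp add: V_def prob_space)
    have Vpos: "V c \<ge> 0" unfolding ER[symmetric] by (intro integral_nonneg_AE) (simp add: Npos)
    have "(\<integral>\<^sup>+\<omega>. ennreal ((r \<omega> - c)\<^sup>2) \<partial>M) = (\<integral>\<^sup>+\<omega>. ennreal ((mu * N \<omega> - c)\<^sup>2 + N \<omega> * sig\<^sup>2) \<partial>M)"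
      using r_decomp[of mu a b c] unfolding rNS N_def S_def by (simp add: algebra_simps)
    also have "\<dots> = ennreal (V c)"
      using nn_integral_eq_integral[OF IR] ER by (simp add: Npos)
    finally have nn: "(\<integral>\<^sup>+\<omega>. ennreal ((r \<omega> - c)\<^sup>2) \<partial>M) = ennreal (V c)" .
    have I: "integrable M (\<lambda>\<omega>. (r \<omega> - c)\<^sup>2)" by (rule integrableI_nn_integral_finite[OF _ _ nn]) simp_all
    moreover have "expectation (\<lambda>\<omega>. (r \<omega> - c)\<^sup>2) = V c"
      using nn_integral_eq_integral[OF I] nn Vpos by (simp add: integral_nonneg_AE)
    ultimately show ?thesis by simp
  qed
  have Ir2: "integrable M (\<lambda>\<omega>. (r \<omega>)\<^sup>2)" and Er2: "expectation (\<lambda>\<omega>. (r \<omega>)\<^sup>2) = V 0" using Rc[of 0] by simp_all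
  have Ir: "integrable M r" by (rule square_integrable_imp_integrable[OF rm Ir2])
  have "expectation (\<lambda>\<omega>. (r \<omega> - 1)\<^sup>2) = V 1" using Rc[of 1] by simp
  moreover have "expectation (\<lambda>\<omega>. (r \<omega> - 1)\<^sup>2) = expectation (\<lambda>\<omega>. (r \<omega>)\<^sup>2) - 2 * expectation r + 1"
  proof -
    have "(\<lambda>\<omega>. (r \<omega> - 1)\<^sup>2) = (\<lambda>\<omega>. (r \<omega>)\<^sup>2 - 2 * r \<omega> + 1)" by (simp add: power2_eq_square algebra_simps)
    then show ?thesis using Ir Ir2 by (simp add: prob_space)
  qed
  ultimately have Er: "expectation r = mu * m1" using Er2 by (simp add: V_def)
  have "variance r = V 0 - (mu * m1)\<^sup>2"
    using variance_eq[OF Ir Ir2] Er Er2 by simp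
  also have "\<dots> = mu\<^sup>2 * lam\<^sup>2 * exp 1 * (Q - 1) + lam * exp (1/2) * (mu\<^sup>2 + sig\<^sup>2)"
  proof -
    have m1sq: "m1 * m1 = lam * lam * exp 1"
      by (simp add: m1_def power_mult_distrib exp_add[symmetric])
    have "V 0 - (mu * m1)\<^sup>2 = mu * mu * (m2 - m1 * m1) + lam * exp (1/2) * (mu * mu + sig * sig)"
      unfolding V_def power2_eq_square m1_def[symmetric] by algebra
    also have "\<dots> = mu\<^sup>2 * lam\<^sup>2 * exp 1 * (Q - 1) + lam * exp (1/2) * (mu\<^sup>2 + sig\<^sup>2)"
      unfolding m1sq m2_def power2_eq_square by algebra
    finally show ?thesis .
  qed
  also have "Q - 1 = (LBINT s=-1..0. (LBINT u=-1..0. k (s - u) - 1))"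
    unfolding Q_def ba Q_shift Q_minus1[OF kc kpos] ..
  finally show ?thesis .
qed

end

theorem mainTheorem2:
  fixes M :: "'a measure"
    and d H c lam mu sig :: real
    and B Z :: "'a \<Rightarrow> real \<Rightarrow> real"
    and T :: "'a \<Rightarrow> int \<Rightarrow> real"
    and e :: "int \<Rightarrow> 'a \<Rightarrow> real"
    and r :: "int \<Rightarrow> 'a \<Rightarrow> real"
  assumes "prob_space M"
    and "0 \<le> d" "d < 1/2" "H = 1/2 + d"
    and "c > 0" "lam > 0" "mu > 0"
    and fbm: "is_fbm M H B"
    and Zdef: "\<And>\<omega> t. Z \<omega> t = B \<omega> (c*t) - B \<omega> (c*t - 1)"
    and Tmeas: "\<And>k. (\<lambda>\<omega>. T \<omega> k) \<in> borel_measurable M"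
    and Tmono: "\<And>\<omega>. \<omega> \<in> space M \<Longrightarrow> strict_mono (T \<omega>)"
    and T0: "\<And>\<omega>. \<omega> \<in> space M \<Longrightarrow> T \<omega> 0 \<le> 0 \<and> 0 < T \<omega> 1"
    and cox: "cox_given M (vimage_algebra (space M) Z (Pi\<^sub>M UNIV (\<lambda>_. borel)))
               (\<lambda>\<omega> a b. LBINT s=a..b. lam * exp (Z \<omega> s)) T"
    and e_indep: "prob_space.indep_vars M (\<lambda>_. borel) e UNIV"
    and e_ident: "\<And>k. distr M borel (e k) = distr M borel (e 0)"
    and e_moments: "\<And>n::nat. integrable M (\<lambda>\<omega>. e 0 \<omega> ^ n)"
    and e_mean: "prob_space.expectation M (e 0) = 0"
    and e_var: "prob_space.variance M (e 0) = sig\<^sup>2"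
    and e_N_indep: "prob_space.indep_var M (Pi\<^sub>M UNIV (\<lambda>_. borel)) (\<lambda>\<omega> k. e k \<omega>)
                      (Pi\<^sub>M UNIV (\<lambda>_. borel)) (\<lambda>\<omega> k. T \<omega> k)"
    and rdef: "\<And>t \<omega>. r t \<omega> = mu * real (count_pts T \<omega> {real_of_int t - 1<..real_of_int t})
                   + (\<Sum>k\<in>{k. T \<omega> k \<in> {real_of_int t - 1<..real_of_int t}}. e k \<omega>)"
  shows "prob_space.variance M (r t) =
           mu\<^sup>2 * lam\<^sup>2 * exp 1 *
             (LBINT s=-1..0. (LBINT u=-1..0. exp (gammaZ H c (s - u)) - 1))
           + lam * exp (1/2) * (mu\<^sup>2 + sig\<^sup>2)"
proof -
  note P = \<open>prob_space M\<close>
  interpret prob_space M by (rule P)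
  have H: "H > 0" using \<open>0 \<le> d\<close> \<open>H = 1/2 + d\<close> by simp
  have Bm: "\<And>t. (\<lambda>\<omega>. B \<omega> t) \<in> borel_measurable M" and Bc: "\<And>\<omega>. \<omega> \<in> space M \<Longrightarrow> continuous_on UNIV (B \<omega>)"
    using fbm unfolding is_fbm_def by auto
  have Zm: "(\<lambda>\<omega>. Z \<omega> s) \<in> borel_measurable M" for s
    unfolding Zdef by (intro borel_measurable_diff Bm)
  have Zc: "continuous_on UNIV (Z \<omega>)" if "\<omega> \<in> space M" for \<omega>
  proof -
    have "continuous_on UNIV (\<lambda>t. B \<omega> (c*t) - B \<omega> (c*t - 1))"
      by (intro continuous_on_diff continuous_on_compose2[OF Bc[OF that]] continuous_intros) auto
    then show ?thesis by (simp add: Zdef[abs_def])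
  qed
  have E1: "(\<integral>\<^sup>+\<omega>. ennreal (exp (Z \<omega> s)) \<partial>M) = ennreal (exp (1/2))" for s
  proof -
    note G = gauss_mgf[OF P Z_gauss1[OF fbm H Zdef, of s]]
    show ?thesis using nn_integral_eq_integral[OF G(1)] G(2) by simp
  qed
  define k where "k r = exp (gammaZ H c r)" for r
  have E2: "(\<integral>\<^sup>+\<omega>. ennreal (exp (Z \<omega> s + Z \<omega> u)) \<partial>M) = ennreal (exp 1 * k (s - u))" for s u
  proof -
    note G = gauss_mgf[OF P Z_gauss2[OF fbm H Zdef, of s u]]
    have "exp ((2 + 2 * gammaZ H c (s - u)) / 2) = exp 1 * k (s - u)"
      by (simp add: k_def exp_add[symmetric])
    then show ?thesis using nn_integral_eq_integral[OF G(1)] G(2) by simp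
  qed
  have kpos: "k x \<ge> 0" for x by (simp add: k_def)
  have kc: "continuous_on UNIV k"
    unfolding k_def[abs_def] gammaZ_def using H
    by (intro continuous_intros continuous_on_powr') auto
  have MS: "main_setting M Z T lam e sig"
    unfolding main_setting_def main_setting_axioms_def cox_setting_def e_setting_def e_setting_axioms_def
    using P \<open>lam > 0\<close> Zm Zc Tmeas cox e_indep e_ident e_moments e_mean e_var e_N_indep by blast
  show ?thesis
    using main_setting.variance_main[OF MS E1 E2 kc kpos rdef[of t]] by (simp add: k_def)
qed

end
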